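(* Consider the storage model described in the context, and assume: (i) the graph $\mathcal G$ on $\{1,\dots,n\}$ in which $j,k$ are adjacent iff $j,k\in S_i$ for some $i$ is connected; (ii) the linear system \[ \sum_{j=1}^{\kappa_i}\alpha_{ij}=\lambda_i\ (i=1,\dots,\mathcal K),\qquad \sum_{i=1}^{\mathcal K}\sum_{j=1}^{\kappa_i}\alpha_{ij}\,\delta_{\ell,s^i_j}=\tfrac1n\ (\ell=1,\dots,n) \] has a positive solution $(\alpha_{ij})$ (all $\alpha_{ij}>0$). Suppose the embedded shape chain $\{\tilde X^e(m)\}_{m\in\mathbb N}$ is constructed using either the Join the Shortest Queue routing policy or the $\varepsilon$-perturbed strong equilibrium routing policy (built from such a positive solution, with $0<\varepsilon<\min_{i,j}\alpha_{ij}$). Then $\tilde X^e(m)$ is positive recurrent, i.e. $\mathbf E(\tau\mid \tilde X^e(0)=x)<\infty$ for every state $x$, where $\tau=\inf\{m>0:\tilde X^e(m)=0\}$. Moreover, there exists $c>0$ such that for all $0<c'<c$, $\mathbf E(e^{c'\tau}\mid \tilde X^e(0)=x)<\infty$ for all $x$.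
   Context: Storage model: there are $n$ nodes $\{1,\dots,n\}$ and $\mathcal K\ge1$ non-empty neighborhoods $S_1,\dots,S_{\mathcal K}\subset\{1,\dots,n\}$ with $\bigcup_i S_i=\{1,\dots,n\}$; $\kappa_i=|S_i|$ and $S_i=\{s^i_1,\dots,s^i_{\kappa_i}\}$ is a fixed enumeration. Items arrive at $S_i$ as independent Poisson processes with rates $\lambda_i>0$, $\sum_{i=1}^{\mathcal K}\lambda_i=1$. Let $\Lambda_i=\{p\in\mathbb R^{\kappa_i}:p_j\ge0,\sum_j p_j=1\}$. A routing policy is a map $P:\mathbb N^n\to\Lambda_1\times\dots\times\Lambda_{\mathcal K}$, $P(x)=(p^{(1)}(x),\dots,p^{(\mathcal K)}(x))$, with $P(x+c\mathbf 1)=P(x)$ for all integers $c$ (it depends only on the shape); an item arriving at $S_i$ when the configuration is $x$ is stored at node $s^i_j$ with probability $p^{(i)}_j(x)$, independently for each arrival. $X(t)=(X_1(t),\dots,X_n(t))$ is the number of items at each node at time $t$, $M(t)=\frac1n\sum_iX_i(t)$, and the shape is $\tilde X(t)=(X_1(t)-M(t),\dots,X_n(t)-M(t))$. $X^e(m)$, $\tilde X^e(m)$ denote the embedded chains observed at successive arrival moments. For $x\in\mathbb N^n$, $s^i_{j_{\min}}(x)$ is the first node of $S_i$ (in the enumeration) at which $x$ is minimal over $S_i$, and $s^i_{j_{\max}}(x)$ the last node of $S_i$ at which $x$ is maximal over $S_i$. JSQ routing policy: $p^{(i)}_j(x)=1$ if $s^i_j=s^i_{j_{\min}}(x)$ and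 $0$ otherwise. $\varepsilon$-PSERP: given a positive solution $\alpha_{ij}$ of the system above and $0<\varepsilon<\min\alpha_{ij}$, $p^{(i)}_j(x)=(\alpha_{ij}+\varepsilon)/\lambda_i$ if $s^i_j=s^i_{j_{\min}}(x)$, $(\alpha_{ij}-\varepsilon)/\lambda_i$ if $s^i_j=s^i_{j_{\max}}(x)$, $\alpha_{ij}/\lambda_i$ otherwise; if $\kappa_i=1$ then $p^{(i)}_1\equiv1$. $\delta_{\ell,m}$ is the Kronecker delta. *)

theory Defs
  imports "HOL-Probability.Probability_Mass_Function"
begin

(* Nodes are 1..n, neighborhoods are indexed 1..K.  S i :: nat list is the fixed
   enumeration of S_i, so s^i_j (paper, j = 1..kappa_i) is  S i ! (j-1)  here, i.e.
   enumeration positions are 0-based: j < length (S i).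
   A configuration x in N^n is a function nat => nat, vanishing outside {1..n}.
   A routing policy is given as  P x i j = p^{(i)}_j(x)  (j 0-based position). *)

definition kap :: "(nat \<Rightarrow> nat list) \<Rightarrow> nat \<Rightarrow> nat" where
  "kap S i = length (S i)"

definition configs :: "nat \<Rightarrow> (nat \<Rightarrow> nat) set" where
  "configs n = {x. \<forall>l. l \<notin> {1..n} \<longrightarrow> x l = 0}"

definition storage_model ::
  "nat \<Rightarrow> nat \<Rightarrow> (nat \<Rightarrow> nat list) \<Rightarrow> (nat \<Rightarrow> real) \<Rightarrow> bool" where
  "storage_model n K S lam \<longleftrightarrow>
     K \<ge> 1 \<and>
     (\<forall>i\<in>{1..K}. S i \<noteq> [] \<and> distinct (S i) \<and> set (S i) \<subseteq> {1..n}) \<and>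
     (\<Union>i\<in>{1..K}. set (S i)) = {1..n} \<and>
     (\<forall>i\<in>{1..K}. lam i > 0) \<and> (\<Sum>i=1..K. lam i) = 1"

definition adjG :: "nat \<Rightarrow> (nat \<Rightarrow> nat list) \<Rightarrow> nat \<Rightarrow> nat \<Rightarrow> bool" where
  "adjG K S j k \<longleftrightarrow> (\<exists>i\<in>{1..K}. j \<in> set (S i) \<and> k \<in> set (S i))"

definition graph_connected :: "nat \<Rightarrow> nat \<Rightarrow> (nat \<Rightarrow> nat list) \<Rightarrow> bool" where
  "graph_connected n K S \<longleftrightarrow> (\<forall>j\<in>{1..n}. \<forall>k\<in>{1..n}. (adjG K S)\<^sup>*\<^sup>* j k)"

definition positive_solution ::
  "nat \<Rightarrow> nat \<Rightarrow> (nat \<Rightarrow> nat list) \<Rightarrow> (nat \<Rightarrow> real) \<Rightarrow> (nat \<Rightarrow> nat \<Rightarrow> real) \<Rightarrow> bool" where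
  "positive_solution n K S lam \<alpha> \<longleftrightarrow>
     (\<forall>i\<in>{1..K}. \<forall>j<kap S i. \<alpha> i j > 0) \<and>
     (\<forall>i\<in>{1..K}. (\<Sum>j<kap S i. \<alpha> i j) = lam i) \<and>
     (\<forall>l\<in>{1..n}. (\<Sum>i=1..K. \<Sum>j<kap S i. \<alpha> i j * (if l = S i ! j then 1 else 0)) = 1 / real n)"

definition jmin :: "(nat \<Rightarrow> nat list) \<Rightarrow> (nat \<Rightarrow> nat) \<Rightarrow> nat \<Rightarrow> nat" where
  "jmin S x i = (LEAST j. j < kap S i \<and> x (S i ! j) = Min (x ` set (S i)))"

definition jmax :: "(nat \<Rightarrow> nat list) \<Rightarrow> (nat \<Rightarrow> nat) \<Rightarrow> nat \<Rightarrow> nat" where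
  "jmax S x i = (GREATEST j. j < kap S i \<and> x (S i ! j) = Max (x ` set (S i)))"

definition JSQ :: "(nat \<Rightarrow> nat list) \<Rightarrow> (nat \<Rightarrow> nat) \<Rightarrow> nat \<Rightarrow> nat \<Rightarrow> real" where
  "JSQ S x i j = (if j = jmin S x i then 1 else 0)"

definition PSERP ::
  "(nat \<Rightarrow> nat list) \<Rightarrow> (nat \<Rightarrow> real) \<Rightarrow> (nat \<Rightarrow> nat \<Rightarrow> real) \<Rightarrow> real
     \<Rightarrow> (nat \<Rightarrow> nat) \<Rightarrow> nat \<Rightarrow> nat \<Rightarrow> real" where
  "PSERP S lam \<alpha> \<epsilon> x i j =
     (if kap S i = 1 then 1
      else if j = jmin S x i then (\<alpha> i j + \<epsilon>) / lam i
      else if j = jmax S x i then (\<alpha> i j - \<epsilon>) / lam i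
      else \<alpha> i j / lam i)"

(* one step of the embedded chain X^e: an arrival goes to S_i with probability lam i
   (= lam_i / sum of rates), then to node S i ! j with probability P x i j *)
definition nbhd_pmf :: "nat \<Rightarrow> (nat \<Rightarrow> real) \<Rightarrow> nat pmf" where
  "nbhd_pmf K lam = embed_pmf (\<lambda>i. if i \<in> {1..K} then lam i else 0)"

definition route_pmf ::
  "(nat \<Rightarrow> nat list) \<Rightarrow> ((nat \<Rightarrow> nat) \<Rightarrow> nat \<Rightarrow> nat \<Rightarrow> real) \<Rightarrow> (nat \<Rightarrow> nat) \<Rightarrow> nat \<Rightarrow> nat pmf" where
  "route_pmf S P x i = embed_pmf (\<lambda>j. if j < kap S i then P x i j else 0)"

definition step_pmf ::
  "nat \<Rightarrow> (nat \<Rightarrow> nat list) \<Rightarrow> (nat \<Rightarrow> real) \<Rightarrow> ((nat \<Rightarrow> nat) \<Rightarrow> nat \<Rightarrow> nat \<Rightarrow> real)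
     \<Rightarrow> (nat \<Rightarrow> nat) \<Rightarrow> (nat \<Rightarrow> nat) pmf" where
  "step_pmf K S lam P x =
     bind_pmf (nbhd_pmf K lam) (\<lambda>i.
       map_pmf (\<lambda>j. x(S i ! j := Suc (x (S i ! j)))) (route_pmf S P x i))"

(* joint law of (X^e(1), ..., X^e(m)) given X^e(0) = x *)
primrec traj :: "((nat \<Rightarrow> nat) \<Rightarrow> (nat \<Rightarrow> nat) pmf) \<Rightarrow> nat \<Rightarrow> (nat \<Rightarrow> nat) \<Rightarrow> (nat \<Rightarrow> nat) list pmf" where
  "traj st 0 x = return_pmf []"
| "traj st (Suc m) x = bind_pmf (st x) (\<lambda>y. map_pmf (Cons y) (traj st m y))"

definition mean :: "nat \<Rightarrow> (nat \<Rightarrow> nat) \<Rightarrow> real" where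
  "mean n x = (\<Sum>l=1..n. real (x l)) / real n"

definition shape :: "nat \<Rightarrow> (nat \<Rightarrow> nat) \<Rightarrow> nat \<Rightarrow> real" where
  "shape n x = (\<lambda>l. if l \<in> {1..n} then real (x l) - mean n x else 0)"

(* P(tau = m | X~^e(0) = shape x), tau = inf {m > 0. X~^e(m) = 0};
   ys = [X^e(1),...,X^e(m)] *)
definition tau_prob ::
  "nat \<Rightarrow> ((nat \<Rightarrow> nat) \<Rightarrow> (nat \<Rightarrow> nat) pmf) \<Rightarrow> (nat \<Rightarrow> nat) \<Rightarrow> nat \<Rightarrow> real" where
  "tau_prob n st x m = measure_pmf.prob (traj st m x)
     {ys. 0 < m \<and> shape n (ys ! (m - 1)) = (\<lambda>_. 0) \<and> (\<forall>k < m - 1. shape n (ys ! k) \<noteq> (\<lambda>_. 0))}"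

(* E(g(tau)) < infinity for a nonnegative g with g(infinity) = infinity:
   tau is a.s. finite and sum_m g(m) P(tau = m) converges *)
definition finite_moment ::
  "(nat \<Rightarrow> real) \<Rightarrow> nat \<Rightarrow> ((nat \<Rightarrow> nat) \<Rightarrow> (nat \<Rightarrow> nat) pmf) \<Rightarrow> (nat \<Rightarrow> nat) \<Rightarrow> bool" where
  "finite_moment g n st x \<longleftrightarrow>
     (tau_prob n st x) sums 1 \<and> summable (\<lambda>m. g m * tau_prob n st x m)"

definition positive_recurrent_exp ::
  "nat \<Rightarrow> nat \<Rightarrow> (nat \<Rightarrow> nat list) \<Rightarrow> (nat \<Rightarrow> real) \<Rightarrow> ((nat \<Rightarrow> nat) \<Rightarrow> nat \<Rightarrow> nat \<Rightarrow> real) \<Rightarrow> bool" where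
  "positive_recurrent_exp n K S lam P \<longleftrightarrow>
     (\<forall>x\<in>configs n. finite_moment (\<lambda>m. real m) n (step_pmf K S lam P) x) \<and>
     (\<exists>c>0. \<forall>c'. 0 < c' \<and> c' < c \<longrightarrow>
        (\<forall>x\<in>configs n. finite_moment (\<lambda>m. exp (c' * real m)) n (step_pmf K S lam P) x))"

end

theory Submission
  imports Defs
begin
lemma embed_facts:
  fixes f :: "'a \<Rightarrow> real"
  assumes A: "finite A" and nn: "\<And>x. 0 \<le> f x" and out: "\<And>x. x \<notin> A \<Longrightarrow> f x = 0"
    and s: "sum f A = 1"
  shows "pmf (embed_pmf f) x = f x"
    and "measure_pmf.expectation (embed_pmf f) g = (\<Sum>a\<in>A. f a * g a)"
proof -
  have prob: "(\<integral>\<^sup>+x. ennreal (f x) \<partial>count_space UNIV) = 1"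
    using A out s nn by (subst nn_integral_count_space'[of A]) (auto simp: sum_ennreal)
  show pm: "pmf (embed_pmf f) x = f x" for x
    using pmf_embed_pmf[of f, OF nn prob] .
  show "measure_pmf.expectation (embed_pmf f) g = (\<Sum>a\<in>A. f a * g a)"
    apply (subst integral_measure_pmf_real[OF A])
    using out pm by (auto simp: set_pmf_eq mult.commute)
qed

lemma bind_expect:
  fixes g :: "'b \<Rightarrow> real"
  assumes "\<And>y. \<bar>g y\<bar> \<le> B"
  shows "measure_pmf.expectation (bind_pmf M N) g = (\<integral>x. measure_pmf.expectation (N x) g \<partial>measure_pmf M)"
  unfolding measure_pmf_bind
  apply (rule integral_bind[where K="count_space UNIV" and B=B and B'=1])
  using assms by (auto simp: measure_pmf.emeasure_space_1 measure_pmf_in_subprob_algebra)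

lemma bind_prob:
  shows "measure_pmf.prob (bind_pmf M N) X = (\<integral>x. measure_pmf.prob (N x) X \<partial>measure_pmf M)"
  unfolding measure_pmf_bind
  by (rule measure_pmf.measure_bind[where N="count_space UNIV"]) (auto simp: measure_pmf_in_subprob_algebra)

definition upd :: "(nat \<Rightarrow> nat) \<Rightarrow> nat \<Rightarrow> nat \<Rightarrow> nat" where
  "upd x l = x(l := Suc (x l))"

definition Di :: "(nat \<Rightarrow> nat list) \<Rightarrow> (nat \<Rightarrow> nat) \<Rightarrow> nat \<Rightarrow> real" where
  "Di S x i = real (Max (x ` set (S i))) - real (Min (x ` set (S i)))"

locale model =
  fixes n K :: nat and S :: "nat \<Rightarrow> nat list" and lam :: "nat \<Rightarrow> real"
    and \<alpha> :: "nat \<Rightarrow> nat \<Rightarrow> real" and P :: "(nat \<Rightarrow> nat) \<Rightarrow> nat \<Rightarrow> nat \<Rightarrow> real"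
    and \<kappa> p0 :: real
  assumes sm: "storage_model n K S lam"
    and conn: "graph_connected n K S"
    and ps: "positive_solution n K S lam \<alpha>"
    and Pnn: "\<And>x i j. i \<in> {1..K} \<Longrightarrow> j < kap S i \<Longrightarrow> 0 \<le> P x i j"
    and Psum: "\<And>x i. i \<in> {1..K} \<Longrightarrow> (\<Sum>j<kap S i. P x i j) = 1"
    and kpos: "\<kappa> > 0"
    and Pdrift: "\<And>x i. i \<in> {1..K} \<Longrightarrow>
        lam i * (\<Sum>j<kap S i. P x i j * real (x (S i ! j)))
          \<le> (\<Sum>j<kap S i. \<alpha> i j * real (x (S i ! j))) - \<kappa> * Di S x i"
    and p0pos: "p0 > 0"
    and Pmin: "\<And>x i. i \<in> {1..K} \<Longrightarrow> p0 \<le> P x i (jmin S x i)"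
begin

abbreviation st where "st \<equiv> step_pmf K S lam P"

definition EE :: "((nat \<Rightarrow> nat) \<Rightarrow> real) \<Rightarrow> (nat \<Rightarrow> nat) \<Rightarrow> real" where
  "EE f x = (\<Sum>i=1..K. lam i * (\<Sum>j<kap S i. P x i j * f (upd x (S i ! j))))"

lemma Ksm: "K \<ge> 1" "\<And>i. i \<in> {1..K} \<Longrightarrow> S i \<noteq> [] \<and> distinct (S i) \<and> set (S i) \<subseteq> {1..n}"
  "(\<Union>i\<in>{1..K}. set (S i)) = {1..n}" "\<And>i. i \<in> {1..K} \<Longrightarrow> lam i > 0" "(\<Sum>i=1..K. lam i) = 1"
  using sm unfolding storage_model_def by auto

lemma step_expect:
  fixes g :: "(nat \<Rightarrow> nat) \<Rightarrow> real"
  assumes "\<And>y. \<bar>g y\<bar> \<le> B"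
  shows "measure_pmf.expectation (st x) g = EE g x"
proof -
  have inner: "measure_pmf.expectation (map_pmf (\<lambda>j. x(S i ! j := Suc (x (S i ! j)))) (route_pmf S P x i)) g
     = (\<Sum>j<kap S i. P x i j * g (upd x (S i ! j)))" if i: "i \<in> {1..K}" for i
  proof -
    have "measure_pmf.expectation (route_pmf S P x i) (\<lambda>j. g (x(S i ! j := Suc (x (S i ! j)))))
        = (\<Sum>j<kap S i. (if j < kap S i then P x i j else 0) * g (x(S i ! j := Suc (x (S i ! j)))))"
      unfolding route_pmf_def
      by (rule embed_facts(2)) (use Pnn[OF i] Psum[OF i] in auto)
    then show ?thesis by (simp add: upd_def)
  qed
  have "measure_pmf.expectation (st x) g = (\<integral>i. measure_pmf.expectation
      (map_pmf (\<lambda>j. x(S i ! j := Suc (x (S i ! j)))) (route_pmf S P x i)) g \<partial>measure_pmf (nbhd_pmf K lam))"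
    unfolding step_pmf_def by (rule bind_expect[OF assms])
  also have "\<dots> = (\<Sum>i\<in>{1..K}. (if i \<in> {1..K} then lam i else 0) * measure_pmf.expectation
      (map_pmf (\<lambda>j. x(S i ! j := Suc (x (S i ! j)))) (route_pmf S P x i)) g)"
    unfolding nbhd_pmf_def
    by (rule embed_facts(2)) (use Ksm in \<open>auto intro: less_imp_le\<close>)
  also have "\<dots> = EE g x" unfolding EE_def by (rule sum.cong) (auto simp: inner[simplified])
  finally show ?thesis .
qed

end

context model begin

lemma EE_mono: assumes "\<And>y. f y \<le> g y" shows "EE f x \<le> EE g x"
  unfolding EE_def
  by (auto intro!: sum_mono mult_left_mono Pnn assms less_imp_le[OF Ksm(4)])

lemma EE_add: "EE (\<lambda>y. f y + g y) x = EE f x + EE g x"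
  unfolding EE_def by (simp add: algebra_simps sum.distrib)

lemma EE_cmult: "EE (\<lambda>y. c * f y) x = c * EE f x"
  unfolding EE_def by (simp add: algebra_simps sum_distrib_left)

lemma EE_const: "EE (\<lambda>y. c) x = c"
proof -
  have "EE (\<lambda>y. c) x = (\<Sum>i=1..K. lam i * c)"
    unfolding EE_def by (intro sum.cong) (auto simp: sum_distrib_right[symmetric] Psum)
  also have "\<dots> = c" using Ksm(5) by (simp add: sum_distrib_right[symmetric])
  finally show ?thesis .
qed

lemma EE_sum: "finite A \<Longrightarrow> EE (\<lambda>y. \<Sum>k\<in>A. f k y) x = (\<Sum>k\<in>A. EE (f k) x)"
  by (induction A rule: finite_induct) (auto simp: EE_add EE_const[of 0, simplified])

lemma EE_nonneg: "(\<And>y. 0 \<le> f y) \<Longrightarrow> 0 \<le> EE f x"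
  using EE_mono[of "\<lambda>_. 0" f x] EE_const[of 0 x] by simp

abbreviation tau where "tau \<equiv> tau_prob n st"

lemma tau_bounds: "0 \<le> tau x m" "tau x m \<le> 1"
  unfolding tau_prob_def by auto

lemma tau_Suc: "tau x (Suc m) = measure_pmf.expectation (st x)
   (\<lambda>y. measure_pmf.prob (traj st m y) (Cons y -` {ys. shape n (ys ! m) = (\<lambda>_. 0) \<and> (\<forall>k < m. shape n (ys ! k) \<noteq> (\<lambda>_. 0))}))"
  unfolding tau_prob_def by (simp add: bind_prob)

lemma tau0: "tau x 0 = 0"
  unfolding tau_prob_def by simp

lemma tau1: "tau x (Suc 0) = EE (\<lambda>y. if shape n y = (\<lambda>_. 0) then 1 else 0) x"
proof -
  have "tau x (Suc 0) = measure_pmf.expectation (st x) (\<lambda>y. if shape n y = (\<lambda>_. 0) then 1 else 0)"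
    unfolding tau_Suc by (intro Bochner_Integration.integral_cong) auto
  also have "\<dots> = EE (\<lambda>y. if shape n y = (\<lambda>_. 0) then 1 else 0) x"
    by (rule step_expect[where B=1]) auto
  finally show ?thesis by simp
qed

lemma tauSS: "tau x (Suc (Suc m)) = EE (\<lambda>y. if shape n y \<noteq> (\<lambda>_. 0) then tau y (Suc m) else 0) x"
proof -
  have e: "(Cons y -` {ys. shape n (ys ! Suc m) = (\<lambda>_. 0) \<and> (\<forall>k < Suc m. shape n (ys ! k) \<noteq> (\<lambda>_. 0))})
     = (if shape n y \<noteq> (\<lambda>_. 0) then {ys. 0 < Suc m \<and> shape n (ys ! (Suc m - 1)) = (\<lambda>_. 0) \<and> (\<forall>k < Suc m - 1. shape n (ys ! k) \<noteq> (\<lambda>_. 0))} else {})" for y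
    by (auto simp: less_Suc_eq_0_disj)
  have "tau x (Suc (Suc m)) = measure_pmf.expectation (st x) (\<lambda>y. if shape n y \<noteq> (\<lambda>_. 0) then tau y (Suc m) else 0)"
    unfolding tau_Suc[of x "Suc m"] e by (intro Bochner_Integration.integral_cong) (auto simp: tau_prob_def)
  also have "\<dots> = EE (\<lambda>y. if shape n y \<noteq> (\<lambda>_. 0) then tau y (Suc m) else 0) x"
    by (rule step_expect[where B=1]) (auto simp: tau_bounds)
  finally show ?thesis .
qed

definition KQ :: "((nat \<Rightarrow> nat) \<Rightarrow> real) \<Rightarrow> (nat \<Rightarrow> nat) \<Rightarrow> real" where
  "KQ f x = EE (\<lambda>y. if shape n y \<noteq> (\<lambda>_. 0) then f y else 0) x"

primrec Qp :: "nat \<Rightarrow> ((nat \<Rightarrow> nat) \<Rightarrow> real) \<Rightarrow> (nat \<Rightarrow> nat) \<Rightarrow> real" where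
  "Qp 0 f = f"
| "Qp (Suc m) f = KQ (Qp m f)"

lemma KQ_mono: "(\<And>y. f y \<le> g y) \<Longrightarrow> KQ f x \<le> KQ g x"
  unfolding KQ_def by (rule EE_mono) auto

lemma KQ_cmult: "KQ (\<lambda>y. c * f y) x = c * KQ f x"
  unfolding KQ_def EE_cmult[symmetric] by (rule arg_cong[where f="\<lambda>h. EE h x"]) auto

lemma KQ_nonneg: "(\<And>y. 0 \<le> f y) \<Longrightarrow> 0 \<le> KQ f x"
  unfolding KQ_def by (rule EE_nonneg) auto

lemma Qp_mono: "(\<And>y. f y \<le> g y) \<Longrightarrow> Qp m f x \<le> Qp m g x"
  by (induction m arbitrary: x) (auto intro!: KQ_mono)

lemma Qp_cmult: "Qp m (\<lambda>y. c * f y) x = c * Qp m f x"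
proof (induction m arbitrary: x)
  case (Suc m)
  have "Qp m (\<lambda>y. c * f y) = (\<lambda>y. c * Qp m f y)"
    using Suc by (simp add: fun_eq_iff)
  then have "Qp (Suc m) (\<lambda>y. c * f y) x = KQ (\<lambda>y. c * Qp m f y) x"
    by simp
  then show ?case by (simp add: KQ_cmult)
qed simp

lemma Qp_add: "Qp (a + b) f = Qp a (Qp b f)"
  by (induction a) auto

lemma Qp_nonneg: "(\<And>y. 0 \<le> f y) \<Longrightarrow> 0 \<le> Qp m f x"
  by (induction m arbitrary: x) (auto intro!: KQ_nonneg)

abbreviation qq where "qq m x \<equiv> Qp m (\<lambda>_. 1) x"

lemma qq_le1: "qq m x \<le> 1"
proof (induction m arbitrary: x)
  case (Suc m)
  have "qq (Suc m) x \<le> KQ (\<lambda>_. 1) x" using Suc by (auto intro!: KQ_mono)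
  also have "\<dots> \<le> EE (\<lambda>_. 1) x" unfolding KQ_def by (rule EE_mono) auto
  finally show ?case by (simp add: EE_const)
qed simp

lemma qq_nonneg: "0 \<le> qq m x" by (rule Qp_nonneg) simp

lemma qq_decr: "qq (Suc m) x \<le> qq m x"
proof (induction m arbitrary: x)
  case 0 show ?case using qq_le1[of 1 x] by simp
next
  case (Suc m) then show ?case by (auto intro!: KQ_mono)
qed

lemma qq_antimono: "m \<le> m' \<Longrightarrow> qq m' x \<le> qq m x"
proof (induction m' rule: dec_induct)
  case (step k)
  then show ?case using qq_decr[of k x] by linarith
qed simp

lemma tau_identity: "(\<Sum>k<Suc m. tau x k) + qq m x = 1"
proof (induction m arbitrary: x)
  case 0 then show ?case by (simp add: tau0)
next
  case (Suc m)
  have inner: "(if shape n y = (\<lambda>_. 0) then 1 else 0)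
      + (if shape n y \<noteq> (\<lambda>_. 0) then (\<Sum>k<m. tau y (Suc k)) + qq m y else 0) = 1" for y
  proof -
    have "(\<Sum>k<Suc m. tau y k) = tau y 0 + (\<Sum>k<m. tau y (Suc k))"
      by (simp only: sum.lessThan_Suc_shift)
    then show ?thesis using Suc[of y] by (simp add: tau0)
  qed
  have "(\<Sum>k<Suc (Suc m). tau x k) = tau x 0 + (tau x (Suc 0) + (\<Sum>k<m. tau x (Suc (Suc k))))"
    by (simp only: sum.lessThan_Suc_shift)
  then have "(\<Sum>k<Suc (Suc m). tau x k) = tau x (Suc 0) + (\<Sum>k<m. tau x (Suc (Suc k)))"
    by (simp add: tau0)
  also have "(\<Sum>k<m. tau x (Suc (Suc k))) = EE (\<lambda>y. \<Sum>k<m. if shape n y \<noteq> (\<lambda>_. 0) then tau y (Suc k) else 0) x"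
    by (subst EE_sum) (auto simp: tauSS)
  finally have "(\<Sum>k<Suc (Suc m). tau x k) + qq (Suc m) x =
     EE (\<lambda>y. if shape n y = (\<lambda>_. 0) then 1 else 0) x +
     EE (\<lambda>y. \<Sum>k<m. if shape n y \<noteq> (\<lambda>_. 0) then tau y (Suc k) else 0) x +
     EE (\<lambda>y. if shape n y \<noteq> (\<lambda>_. 0) then qq m y else 0) x"
    by (simp add: tau1 KQ_def)
  also have "\<dots> = EE (\<lambda>y. (if shape n y = (\<lambda>_. 0) then 1 else 0)
      + (if shape n y \<noteq> (\<lambda>_. 0) then (\<Sum>k<m. tau y (Suc k)) + qq m y else 0)) x"
    by (simp add: EE_add[symmetric] if_distrib if_distribR cong: if_cong)
  also have "\<dots> = 1" unfolding inner EE_const ..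
  finally show ?case .
qed

end

definition V :: "nat \<Rightarrow> (nat \<Rightarrow> nat) \<Rightarrow> real" where
  "V n x = (\<Sum>l=1..n. (shape n x l)\<^sup>2)"

definition W :: "nat \<Rightarrow> (nat \<Rightarrow> nat) \<Rightarrow> real" where
  "W n x = sqrt (V n x)"

definition Dx :: "nat \<Rightarrow> (nat \<Rightarrow> nat) \<Rightarrow> real" where
  "Dx n x = real (Max (x ` {1..n})) - real (Min (x ` {1..n}))"

lemma V_nonneg: "0 \<le> V n x" unfolding V_def by (auto intro: sum_nonneg)

lemma W_nonneg: "0 \<le> W n x" unfolding W_def by (simp add: V_nonneg)

lemma W_sq: "(W n x)\<^sup>2 = V n x" unfolding W_def by (simp add: V_nonneg)

lemma shape_in: "l \<in> {1..n} \<Longrightarrow> shape n x l = real (x l) - mean n x"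
  unfolding shape_def by simp

lemma shape_sum: assumes "n \<ge> 1" shows "(\<Sum>l=1..n. shape n x l) = 0"
proof -
  have "(\<Sum>l=1..n. shape n x l) = (\<Sum>l=1..n. real (x l)) - real n * mean n x"
    by (simp add: shape_in sum_subtractf)
  also have "\<dots> = 0" using assms unfolding mean_def by simp
  finally show ?thesis .
qed

lemma sum_upd: assumes "l \<in> {1..n}"
  shows "(\<Sum>k=1..n. real (upd x l k)) = (\<Sum>k=1..n. real (x k)) + 1"
proof -
  have "(\<Sum>k=1..n. real (upd x l k)) = (\<Sum>k=1..n. real (x k) + (if k = l then 1 else 0))"
    by (intro sum.cong) (auto simp: upd_def)
  also have "\<dots> = (\<Sum>k=1..n. real (x k)) + 1"
    using assms by (simp add: sum.distrib)
  finally show ?thesis .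
qed

lemma mean_upd: assumes "l \<in> {1..n}" shows "mean n (upd x l) = mean n x + 1 / real n"
  using assms unfolding mean_def sum_upd[OF assms] by (simp add: add_divide_distrib)

lemma shape_upd: assumes "l \<in> {1..n}" "k \<in> {1..n}"
  shows "shape n (upd x l) k = shape n x k + (if k = l then 1 else 0) - 1 / real n"
  using assms by (simp add: shape_in mean_upd) (simp add: upd_def)

lemma V_upd: assumes "l \<in> {1..n}"
  shows "V n (upd x l) = V n x + 2 * shape n x l + 1 - 1 / real n"
proof -
  have n: "n \<ge> 1" using assms by auto
  let ?z = "shape n x"
  let ?b = "\<lambda>k. (if k = l then 1 else 0) - 1 / real n :: real"
  have "V n (upd x l) = (\<Sum>k=1..n. (?z k + ?b k)\<^sup>2)"
    unfolding V_def by (intro sum.cong) (auto simp: shape_upd[OF assms] algebra_simps)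
  also have "\<dots> = (\<Sum>k=1..n. (?z k)\<^sup>2) + 2 * (\<Sum>k=1..n. ?z k * ?b k) + (\<Sum>k=1..n. (?b k)\<^sup>2)"
    by (simp add: power2_sum sum.distrib sum_distrib_left mult.assoc)
  also have "(\<Sum>k=1..n. ?z k * ?b k) = ?z l - (\<Sum>k=1..n. ?z k) / real n"
    using assms by (simp add: right_diff_distrib sum_subtractf sum_divide_distrib if_distrib[where f="\<lambda>t. _ * t"] cong: if_cong)
  also have "(\<Sum>k=1..n. ?z k) = 0" using shape_sum[OF n] .
  also have "(\<Sum>k=1..n. (?b k)\<^sup>2) = 1 - 1 / real n"
  proof -
    have "(\<Sum>k=1..n. (?b k)\<^sup>2) = (\<Sum>k=1..n. (if k = l then 1 - 2 / real n else 0) + 1 / (real n)^2)"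
      by (intro sum.cong) (auto simp: power2_eq_square field_simps)
    also have "\<dots> = 1 - 2 / real n + real n / (real n)^2"
      using assms by (simp add: sum.distrib)
    also have "\<dots> = 1 - 1 / real n" using n by (simp add: power2_eq_square field_simps)
    finally show ?thesis .
  qed
  finally show ?thesis unfolding V_def by simp
qed

lemma abs_shape_le_W: assumes "l \<in> {1..n}" shows "\<bar>shape n x l\<bar> \<le> W n x"
proof -
  have "(shape n x l)\<^sup>2 \<le> V n x"
    unfolding V_def using assms by (intro member_le_sum) auto
  then show ?thesis unfolding W_def by (simp add: real_le_rsqrt)
qed

lemma W_upd_le: assumes "l \<in> {1..n}" shows "W n (upd x l) \<le> W n x + 1"
proof -
  have "V n (upd x l) \<le> (W n x + 1)\<^sup>2"
  proof -
    have h: "0 \<le> 1 / real n" by simp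
    have h2: "shape n x l \<le> W n x" using abs_shape_le_W[OF assms, of x] by linarith
    show ?thesis
      using V_upd[OF assms, of x] W_sq[of n x] h h2 by (simp only: power2_sum power_one mult_1_right)
  qed
  then show ?thesis unfolding W_def[of n "upd x l"] by (intro real_le_lsqrt) (auto simp: W_nonneg)
qed

lemma W_upd_ge: assumes "l \<in> {1..n}" shows "W n x \<le> W n (upd x l) + 1"
proof -
  have zl: "shape n (upd x l) l = shape n x l + 1 - 1 / real n"
    using shape_upd[OF assms assms] by simp
  have "V n x \<le> (W n (upd x l) + 1)\<^sup>2"
  proof -
    have h: "0 \<le> 1 / real n" by simp
    have h2: "- W n (upd x l) \<le> shape n x l + 1 - 1 / real n"
      using abs_shape_le_W[OF assms, of "upd x l"] zl by linarith
    show ?thesis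
      using V_upd[OF assms, of x] W_sq[of n "upd x l"] h h2 by (simp only: power2_sum power_one mult_1_right)
  qed
  then show ?thesis unfolding W_def[of n x] by (intro real_le_lsqrt) (auto simp: W_nonneg)
qed

lemma mean_bounds: assumes "n \<ge> 1"
  shows "real (Min (x ` {1..n})) \<le> mean n x" "mean n x \<le> real (Max (x ` {1..n}))"
proof -
  have "(\<Sum>l=1..n. real (Min (x ` {1..n}))) \<le> (\<Sum>l=1..n. real (x l))"
    by (intro sum_mono) auto
  then show "real (Min (x ` {1..n})) \<le> mean n x"
    using assms unfolding mean_def by (simp add: field_simps)
  have "(\<Sum>l=1..n. real (x l)) \<le> (\<Sum>l=1..n. real (Max (x ` {1..n})))"
    by (intro sum_mono) auto
  then show "mean n x \<le> real (Max (x ` {1..n}))"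
    using assms unfolding mean_def by (simp add: field_simps)
qed

lemma abs_shape_le_D: assumes "l \<in> {1..n}" shows "\<bar>shape n x l\<bar> \<le> Dx n x"
proof -
  have n: "n \<ge> 1" using assms by auto
  have "real (Min (x ` {1..n})) \<le> real (x l)" "real (x l) \<le> real (Max (x ` {1..n}))"
    using assms by auto
  moreover have "shape n x l = real (x l) - mean n x" by (rule shape_in[OF assms])
  ultimately show ?thesis using mean_bounds[OF n, of x] unfolding Dx_def abs_le_iff by linarith
qed

lemma V_le_D: "V n x \<le> real n * (Dx n x)\<^sup>2"
proof -
  have "V n x \<le> (\<Sum>l=1..n. (Dx n x)\<^sup>2)"
    unfolding V_def
  proof (intro sum_mono)
    fix l assume l: "l \<in> {1..n}"
    show "(shape n x l)\<^sup>2 \<le> (Dx n x)\<^sup>2"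
      using abs_shape_le_D[OF l, of x] by (metis abs_ge_zero power2_abs power_mono)
  qed
  then show ?thesis by simp
qed

lemma W_le_D: assumes "n \<ge> 1" shows "W n x \<le> sqrt (real n) * Dx n x"
proof -
  have D0: "0 \<le> Dx n x" using assms abs_shape_le_D[of 1 n x] by auto
  have "V n x \<le> (sqrt (real n) * Dx n x)\<^sup>2"
    using V_le_D[of n x] by (simp add: power_mult_distrib)
  then show ?thesis unfolding W_def by (intro real_le_lsqrt) (use D0 in auto)
qed

lemma D_le_W: assumes "n \<ge> 1" shows "Dx n x \<le> 2 * W n x"
proof -
  have fin: "finite (x ` {1..n})" "x ` {1..n} \<noteq> {}" using assms by auto
  obtain l1 where l1: "l1 \<in> {1..n}" "x l1 = Max (x ` {1..n})"
    using Max_in[OF fin] by auto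
  obtain l2 where l2: "l2 \<in> {1..n}" "x l2 = Min (x ` {1..n})"
    using Min_in[OF fin] by auto
  have "Dx n x = shape n x l1 - shape n x l2"
    unfolding Dx_def using l1 l2 by (simp add: shape_in)
  then show ?thesis using abs_shape_le_W[OF l1(1), of x] abs_shape_le_W[OF l2(1), of x] by linarith
qed

lemma crossing:
  fixes x :: "nat \<Rightarrow> nat"
  assumes "(adjG K S)\<^sup>*\<^sup>* a b" "x a \<le> t" "t < x b"
  shows "\<exists>i\<in>{1..K}. \<exists>u\<in>set (S i). \<exists>v\<in>set (S i). x u \<le> t \<and> t < x v"
  using assms(1,3)
proof (induction rule: rtranclp_induct)
  case base then show ?case using assms(2) by linarith
next
  case (step y z)
  show ?case
  proof (cases "t < x y")
    case True then show ?thesis using step.IH by simp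
  next
    case False then show ?thesis using step.hyps(2) step.prems unfolding adjG_def by force
  qed
qed

lemma sqrt_concave: assumes "0 < a" "0 \<le> b"
  shows "sqrt b \<le> sqrt a + (b - a) / (2 * sqrt a)"
proof -
  let ?s = "sqrt a" and ?r = "sqrt b"
  have s: "0 < ?s" using assms by simp
  have "0 \<le> (?r - ?s)\<^sup>2" by simp
  then have "2 * ?s * ?r \<le> ?s\<^sup>2 + ?r\<^sup>2" by (simp add: power2_diff algebra_simps)
  then have "?r \<le> (?s\<^sup>2 + ?r\<^sup>2) / (2 * ?s)" using s by (simp add: pos_le_divide_eq mult.commute)
  also have "(?s\<^sup>2 + ?r\<^sup>2) / (2 * ?s) = ?s + (b - a) / (2 * ?s)"
    using s assms by (simp add: field_simps power2_eq_square)
  finally show ?thesis .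
qed

context model begin

lemma S_in: "i \<in> {1..K} \<Longrightarrow> j < kap S i \<Longrightarrow> S i ! j \<in> {1..n}"
  using Ksm(2)[of i] unfolding kap_def by (meson nth_mem subsetD)

lemma n_ge1: "n \<ge> 1"
proof -
  have "set (S 1) \<subseteq> {1..n}" "S 1 \<noteq> []" using Ksm(1) Ksm(2)[of 1] by auto
  then show ?thesis by (cases "S 1") auto
qed

lemma Min_le_Max_i: fixes x :: "nat \<Rightarrow> nat" assumes "i \<in> {1..K}" shows "Min (x ` set (S i)) \<le> Max (x ` set (S i))"
proof -
  obtain e where "e \<in> set (S i)" using Ksm(2)[OF assms] by (cases "S i") auto
  then have "Min (x ` set (S i)) \<le> x e" "x e \<le> Max (x ` set (S i))" by auto
  then show ?thesis by linarith
qed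

lemma Di_nonneg: "i \<in> {1..K} \<Longrightarrow> 0 \<le> Di S x i"
  unfolding Di_def using Min_le_Max_i[of i x] by simp

lemma sum_Di_ge: "Dx n x \<le> (\<Sum>i=1..K. Di S x i)"
proof -
  define mn where "mn = Min (x ` {1..n})"
  define mx where "mx = Max (x ` {1..n})"
  define A where "A i = {Min (x ` set (S i))..<Max (x ` set (S i))}" for i
  have fin: "finite (x ` {1..n})" "x ` {1..n} \<noteq> {}" using n_ge1 by auto
  obtain a where a: "a \<in> {1..n}" "x a = mn" using Min_in[OF fin] unfolding mn_def by auto
  obtain b where b: "b \<in> {1..n}" "x b = mx" using Max_in[OF fin] unfolding mx_def by auto
  have cover: "\<exists>i\<in>{1..K}. t \<in> A i" if t: "t \<in> {mn..<mx}" for t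
  proof -
    have "(adjG K S)\<^sup>*\<^sup>* a b" using conn a b unfolding graph_connected_def by auto
    then obtain i u v where i: "i \<in> {1..K}" "u \<in> set (S i)" "v \<in> set (S i)" "x u \<le> t" "t < x v"
      using crossing[of K S a b x t] t a b by auto
    have "Min (x ` set (S i)) \<le> x u" "x v \<le> Max (x ` set (S i))" using i by auto
    then have "t \<in> A i" using i unfolding A_def atLeastLessThan_iff by linarith
    then show ?thesis using i(1) by blast
  qed
  have "card {mn..<mx} = (\<Sum>t\<in>{mn..<mx}. 1::nat)" by simp
  also have "\<dots> \<le> (\<Sum>t\<in>{mn..<mx}. \<Sum>i\<in>{1..K}. if t \<in> A i then 1 else 0)"
  proof (intro sum_mono)
    fix t assume "t \<in> {mn..<mx}"
    then obtain i where i: "i \<in> {1..K}" "t \<in> A i" using cover by blast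
    have "(if t \<in> A i then 1 else 0) \<le> (\<Sum>i\<in>{1..K}. if t \<in> A i then 1 else (0::nat))"
      by (rule member_le_sum) (use i in auto)
    then show "1 \<le> (\<Sum>i\<in>{1..K}. if t \<in> A i then 1 else (0::nat))" using i by simp
  qed
  also have "\<dots> = (\<Sum>i\<in>{1..K}. \<Sum>t\<in>{mn..<mx}. if t \<in> A i then 1 else 0)"
    by (rule sum.swap)
  also have "\<dots> \<le> (\<Sum>i\<in>{1..K}. card (A i))"
  proof (intro sum_mono)
    fix i
    have "(\<Sum>t\<in>{mn..<mx}. if t \<in> A i then 1 else (0::nat)) = card ({mn..<mx} \<inter> A i)"
      by (simp add: sum.inter_restrict[symmetric])
    also have "\<dots> \<le> card (A i)" by (rule card_mono) (auto simp: A_def)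
    finally show "(\<Sum>t\<in>{mn..<mx}. if t \<in> A i then 1 else (0::nat)) \<le> card (A i)" .
  qed
  finally have c: "mx - mn \<le> (\<Sum>i\<in>{1..K}. Max (x ` set (S i)) - Min (x ` set (S i)))"
    by (simp add: A_def)
  have mnmx: "mn \<le> mx" using a b unfolding mn_def mx_def using fin by (metis Max_ge Min_le a(1) image_eqI)
  have "Dx n x = real (mx - mn)" unfolding Dx_def mn_def[symmetric] mx_def[symmetric] using mnmx by simp
  also have "\<dots> \<le> real (\<Sum>i\<in>{1..K}. Max (x ` set (S i)) - Min (x ` set (S i)))"
    using c by linarith
  also have "\<dots> = (\<Sum>i=1..K. Di S x i)"
    unfolding of_nat_sum
  proof (intro sum.cong refl)
    fix i assume i: "i \<in> {1..K}"
    have "Min (x ` set (S i)) \<le> Max (x ` set (S i))" using Min_le_Max_i[OF i] .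
    then show "real (Max (x ` set (S i)) - Min (x ` set (S i))) = Di S x i" unfolding Di_def by simp
  qed
  finally show ?thesis .
qed

end

context model begin

lemma ps_facts: "\<And>i j. i \<in> {1..K} \<Longrightarrow> j < kap S i \<Longrightarrow> \<alpha> i j > 0"
  "\<And>i. i \<in> {1..K} \<Longrightarrow> (\<Sum>j<kap S i. \<alpha> i j) = lam i"
  "\<And>l. l \<in> {1..n} \<Longrightarrow> (\<Sum>i=1..K. \<Sum>j<kap S i. \<alpha> i j * (if l = S i ! j then 1 else 0)) = 1 / real n"
  using ps unfolding positive_solution_def by auto

lemma alpha_zero: "(\<Sum>i=1..K. \<Sum>j<kap S i. \<alpha> i j * shape n x (S i ! j)) = 0"
proof -
  let ?z = "shape n x"
  have "(\<Sum>i=1..K. \<Sum>j<kap S i. \<alpha> i j * ?z (S i ! j))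
      = (\<Sum>i=1..K. \<Sum>j<kap S i. \<Sum>l=1..n. ?z l * (\<alpha> i j * (if l = S i ! j then 1 else 0)))"
  proof (intro sum.cong refl)
    fix i j assume i: "i \<in> {1..K}" and j: "j \<in> {..<kap S i}"
    have "(\<Sum>l=1..n. ?z l * (\<alpha> i j * (if l = S i ! j then 1 else 0)))
        = (\<Sum>l=1..n. if l = S i ! j then \<alpha> i j * ?z (S i ! j) else 0)"
      by (intro sum.cong) auto
    also have "\<dots> = \<alpha> i j * ?z (S i ! j)" using S_in[OF i] j by simp
    finally show "\<alpha> i j * ?z (S i ! j) = (\<Sum>l=1..n. ?z l * (\<alpha> i j * (if l = S i ! j then 1 else 0)))" ..
  qed
  also have "\<dots> = (\<Sum>i=1..K. \<Sum>l=1..n. \<Sum>j<kap S i. ?z l * (\<alpha> i j * (if l = S i ! j then 1 else 0)))"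
    by (intro sum.cong refl sum.swap)
  also have "\<dots> = (\<Sum>l=1..n. \<Sum>i=1..K. \<Sum>j<kap S i. ?z l * (\<alpha> i j * (if l = S i ! j then 1 else 0)))"
    by (rule sum.swap)
  also have "\<dots> = (\<Sum>l=1..n. ?z l * (\<Sum>i=1..K. \<Sum>j<kap S i. \<alpha> i j * (if l = S i ! j then 1 else 0)))"
    by (simp add: sum_distrib_left)
  also have "\<dots> = (\<Sum>l=1..n. ?z l * (1 / real n))"
    using ps_facts(3) by (intro sum.cong refl) auto
  also have "\<dots> = (\<Sum>l=1..n. ?z l) / real n" by (simp add: sum_divide_distrib)
  also have "\<dots> = 0" using shape_sum[OF n_ge1] by simp
  finally show ?thesis .
qed

lemma drift_i: assumes i: "i \<in> {1..K}"
  shows "lam i * (\<Sum>j<kap S i. P x i j * shape n x (S i ! j))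
     \<le> (\<Sum>j<kap S i. \<alpha> i j * shape n x (S i ! j)) - \<kappa> * Di S x i"
proof -
  let ?m = "mean n x"
  have "(\<Sum>j<kap S i. P x i j * shape n x (S i ! j)) = (\<Sum>j<kap S i. P x i j * real (x (S i ! j))) - ?m"
  proof -
    have "(\<Sum>j<kap S i. P x i j * shape n x (S i ! j)) = (\<Sum>j<kap S i. P x i j * real (x (S i ! j)) - P x i j * ?m)"
      by (intro sum.cong refl) (simp add: shape_in[OF S_in[OF i]] right_diff_distrib)
    also have "\<dots> = (\<Sum>j<kap S i. P x i j * real (x (S i ! j))) - (\<Sum>j<kap S i. P x i j) * ?m"
      by (simp add: sum_subtractf sum_distrib_right)
    finally show ?thesis using Psum[OF i] by simp
  qed
  moreover have "(\<Sum>j<kap S i. \<alpha> i j * shape n x (S i ! j)) = (\<Sum>j<kap S i. \<alpha> i j * real (x (S i ! j))) - lam i * ?m"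
  proof -
    have "(\<Sum>j<kap S i. \<alpha> i j * shape n x (S i ! j)) = (\<Sum>j<kap S i. \<alpha> i j * real (x (S i ! j)) - \<alpha> i j * ?m)"
      by (intro sum.cong refl) (simp add: shape_in[OF S_in[OF i]] right_diff_distrib)
    also have "\<dots> = (\<Sum>j<kap S i. \<alpha> i j * real (x (S i ! j))) - (\<Sum>j<kap S i. \<alpha> i j) * ?m"
      by (simp add: sum_subtractf sum_distrib_right)
    finally show ?thesis using ps_facts(2)[OF i] by simp
  qed
  ultimately show ?thesis using Pdrift[OF i, of x] by (simp add: right_diff_distrib)
qed

lemma drift_sum: "(\<Sum>i=1..K. lam i * (\<Sum>j<kap S i. P x i j * shape n x (S i ! j)))
   \<le> - \<kappa> * Dx n x"
proof -
  have "(\<Sum>i=1..K. lam i * (\<Sum>j<kap S i. P x i j * shape n x (S i ! j)))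
     \<le> (\<Sum>i=1..K. (\<Sum>j<kap S i. \<alpha> i j * shape n x (S i ! j)) - \<kappa> * Di S x i)"
    by (intro sum_mono drift_i) auto
  also have "\<dots> = (\<Sum>i=1..K. \<Sum>j<kap S i. \<alpha> i j * shape n x (S i ! j)) - \<kappa> * (\<Sum>i=1..K. Di S x i)"
    by (simp add: sum_subtractf sum_distrib_left)
  also have "\<dots> = - \<kappa> * (\<Sum>i=1..K. Di S x i)"
    using alpha_zero[of x] by simp
  also have "\<dots> \<le> - \<kappa> * Dx n x" using sum_Di_ge[of x] kpos by simp
  finally show ?thesis .
qed

lemma EE_V: "EE (V n) x \<le> V n x + 1 - 2 * \<kappa> * Dx n x"
proof -
  let ?c = "V n x + 1 - 1 / real n"
  have "EE (V n) x = (\<Sum>i=1..K. lam i * (?c + 2 * (\<Sum>j<kap S i. P x i j * shape n x (S i ! j))))"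
    unfolding EE_def
  proof (intro sum.cong refl arg_cong[where f="\<lambda>t. lam _ * t"])
    fix i assume i: "i \<in> {1..K}"
    have "(\<Sum>j<kap S i. P x i j * V n (upd x (S i ! j))) = (\<Sum>j<kap S i. P x i j * ?c + 2 * (P x i j * shape n x (S i ! j)))"
      by (intro sum.cong refl) (simp add: V_upd[OF S_in[OF i]] algebra_simps)
    also have "\<dots> = ?c + 2 * (\<Sum>j<kap S i. P x i j * shape n x (S i ! j))"
      by (simp add: sum.distrib sum_distrib_left[symmetric] sum_distrib_right[symmetric] Psum[OF i])
    finally show "(\<Sum>j<kap S i. P x i j * V n (upd x (S i ! j))) = ?c + 2 * (\<Sum>j<kap S i. P x i j * shape n x (S i ! j))" .
  qed
  also have "\<dots> = (\<Sum>i=1..K. ?c * lam i + 2 * (lam i * (\<Sum>j<kap S i. P x i j * shape n x (S i ! j))))"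
    by (intro sum.cong refl) (simp only: distrib_left mult.commute mult.left_commute)
  also have "\<dots> = ?c * (\<Sum>i=1..K. lam i) + 2 * (\<Sum>i=1..K. lam i * (\<Sum>j<kap S i. P x i j * shape n x (S i ! j)))"
    by (simp only: sum.distrib sum_distrib_left)
  also have "\<dots> \<le> ?c + 2 * (- \<kappa> * Dx n x)"
    using drift_sum[of x] Ksm(5) by simp
  also have "\<dots> \<le> V n x + 1 - 2 * \<kappa> * Dx n x"
    by simp
  finally show ?thesis .
qed

lemma W_upd_bounds: "i \<in> {1..K} \<Longrightarrow> j < kap S i \<Longrightarrow>
   W n (upd x (S i ! j)) \<le> W n x + 1 \<and> W n x \<le> W n (upd x (S i ! j)) + 1"
  using W_upd_le W_upd_ge S_in by blast

lemma EE_W: assumes R: "sqrt (real n) / \<kappa> \<le> W n x"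
  shows "EE (W n) x \<le> W n x - \<kappa> / (2 * sqrt (real n))"
proof -
  let ?w = "W n x"
  have sn: "sqrt (real n) > 0" using n_ge1 by simp
  have wpos: "?w > 0" using R sn kpos by (smt (verit) divide_pos_pos)
  have Vpos: "V n x > 0" using wpos W_sq[of n x] by (metis zero_less_power2 less_irrefl)
  have sw: "sqrt (V n x) = ?w" unfolding W_def ..
  have pt: "W n y \<le> (?w - V n x / (2 * ?w)) + (1 / (2 * ?w)) * V n y" for y
    using sqrt_concave[OF Vpos V_nonneg[of n y]] unfolding W_def[of n y] sw
    by (simp add: diff_divide_distrib)
  have "EE (W n) x \<le> EE (\<lambda>y. (?w - V n x / (2 * ?w)) + (1 / (2 * ?w)) * V n y) x"
    by (rule EE_mono[OF pt])
  also have "\<dots> = (?w - V n x / (2 * ?w)) + (1 / (2 * ?w)) * EE (V n) x"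
    by (simp only: EE_add EE_cmult EE_const)
  also have "\<dots> = ?w + (EE (V n) x - V n x) / (2 * ?w)"
    by (simp add: diff_divide_distrib)
  also have "\<dots> \<le> ?w + (1 - 2 * \<kappa> * (?w / sqrt (real n))) / (2 * ?w)"
  proof -
    have "?w / sqrt (real n) \<le> Dx n x" using W_le_D[OF n_ge1, of x] sn by (simp add: divide_le_eq mult.commute)
    then have "EE (V n) x - V n x \<le> 1 - 2 * \<kappa> * (?w / sqrt (real n))"
      using EE_V[of x] kpos by (smt (verit) mult_left_mono)
    then show ?thesis using wpos by (simp add: divide_right_mono)
  qed
  also have "\<dots> = ?w + 1 / (2 * ?w) - \<kappa> / sqrt (real n)"
    using wpos sn by (simp add: field_simps)
  also have "\<dots> \<le> ?w + \<kappa> / (2 * sqrt (real n)) - \<kappa> / sqrt (real n)"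
  proof -
    have "1 / (2 * ?w) \<le> \<kappa> / (2 * sqrt (real n))"
      using R wpos sn kpos by (simp add: field_simps)
    then show ?thesis by simp
  qed
  also have "\<dots> = ?w - \<kappa> / (2 * sqrt (real n))" by (simp add: field_simps)
  finally show ?thesis .
qed

end

lemma exp_quad: fixes t :: real assumes "\<bar>t\<bar> \<le> 1" shows "exp t \<le> 1 + t + t\<^sup>2"
proof (cases "t \<ge> 0")
  case True then show ?thesis using exp_bound assms by auto
next
  case False
  define s where "s = - t"
  have s: "0 < s" "s \<le> 1" using False assms unfolding s_def by auto
  have A: "(1 + s / 2)\<^sup>2 \<le> exp s"
    using exp_ge_one_plus_x_over_n_power_n[where x=s and n=2] s by simp
  have Apos: "0 < (1 + s / 2)\<^sup>2" using s by simp
  have key: "1 \<le> (1 + s / 2)\<^sup>2 * (1 - s + s\<^sup>2)"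
  proof -
    have "(1 + s / 2)\<^sup>2 * (1 - s + s\<^sup>2) = 1 + s\<^sup>2 / 4 + 3 * s^3 / 4 + s^4 / 4"
      by (simp add: power2_eq_square power3_eq_cube power4_eq_xxxx field_simps)
    moreover have "0 \<le> s\<^sup>2 / 4 + 3 * s^3 / 4 + s^4 / 4" using s by simp
    ultimately show ?thesis by linarith
  qed
  have "exp t = 1 / exp s" unfolding s_def by (simp add: exp_minus field_simps)
  also have "\<dots> \<le> 1 / (1 + s / 2)\<^sup>2" using A Apos by (intro divide_left_mono) auto
  also have "\<dots> \<le> 1 - s + s\<^sup>2" using key Apos by (simp add: divide_le_eq mult.commute)
  also have "\<dots> = 1 + t + t\<^sup>2" unfolding s_def by simp
  finally show ?thesis .
qed

definition deficit :: "nat \<Rightarrow> (nat \<Rightarrow> nat) \<Rightarrow> nat" where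
  "deficit n x = (\<Sum>l=1..n. Max (x ` {1..n}) - x l)"

context model begin

lemma EE_mono_supp:
  assumes "\<And>i j. i \<in> {1..K} \<Longrightarrow> j < kap S i \<Longrightarrow> f (upd x (S i ! j)) \<le> g (upd x (S i ! j))"
  shows "EE f x \<le> EE g x"
  unfolding EE_def
  by (auto intro!: sum_mono mult_left_mono Pnn assms less_imp_le[OF Ksm(4)])

lemma EE_expW:
  fixes \<theta> :: real
  assumes th: "0 < \<theta>" "\<theta> \<le> 1" "\<theta> \<le> \<kappa> / (4 * sqrt (real n))"
    and R: "sqrt (real n) / \<kappa> \<le> W n x"
  shows "EE (\<lambda>y. exp (\<theta> * W n y)) x \<le> (1 - \<theta> * (\<kappa> / (4 * sqrt (real n)))) * exp (\<theta> * W n x)"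
proof -
  let ?w = "W n x" and ?d = "\<kappa> / (2 * sqrt (real n))"
  let ?E = "exp (\<theta> * ?w)"
  have "EE (\<lambda>y. exp (\<theta> * W n y)) x \<le> EE (\<lambda>y. ?E * (1 + \<theta> * (W n y - ?w) + \<theta>\<^sup>2)) x"
  proof (rule EE_mono_supp)
    fix i j assume i: "i \<in> {1..K}" and j: "j < kap S i"
    let ?y = "upd x (S i ! j)"
    have b: "\<bar>W n ?y - ?w\<bar> \<le> 1" using W_upd_bounds[OF i j, of x] by linarith
    have "\<bar>\<theta> * (W n ?y - ?w)\<bar> \<le> 1" using b th by (simp add: abs_mult mult_le_one)
    then have e: "exp (\<theta> * (W n ?y - ?w)) \<le> 1 + \<theta> * (W n ?y - ?w) + (\<theta> * (W n ?y - ?w))\<^sup>2"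
      by (rule exp_quad)
    have b2: "(W n ?y - ?w)\<^sup>2 \<le> 1"
      using b by (metis abs_ge_zero power2_abs power_mono one_power2)
    have "(\<theta> * (W n ?y - ?w))\<^sup>2 \<le> \<theta>\<^sup>2"
      unfolding power_mult_distrib using b2 by (intro mult_left_le) auto
    with e have "exp (\<theta> * (W n ?y - ?w)) \<le> 1 + \<theta> * (W n ?y - ?w) + \<theta>\<^sup>2" by linarith
    then have "?E * exp (\<theta> * (W n ?y - ?w)) \<le> ?E * (1 + \<theta> * (W n ?y - ?w) + \<theta>\<^sup>2)"
      by (intro mult_left_mono) auto
    moreover have "?E * exp (\<theta> * (W n ?y - ?w)) = exp (\<theta> * W n ?y)"
      by (simp add: exp_add[symmetric] algebra_simps)
    ultimately show "exp (\<theta> * W n ?y) \<le> ?E * (1 + \<theta> * (W n ?y - ?w) + \<theta>\<^sup>2)" by simp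
  qed
  also have "EE (\<lambda>y. ?E * (1 + \<theta> * (W n y - ?w) + \<theta>\<^sup>2)) x
      = EE (\<lambda>y. ?E * (1 - \<theta> * ?w + \<theta>\<^sup>2) + (?E * \<theta>) * W n y) x"
    by (intro arg_cong[where f="\<lambda>h. EE h x"]) (auto simp: algebra_simps)
  also have "\<dots> = ?E * (1 - \<theta> * ?w + \<theta>\<^sup>2) + (?E * \<theta>) * EE (W n) x"
    by (simp only: EE_add EE_cmult EE_const)
  also have "\<dots> \<le> ?E * (1 - \<theta> * ?w + \<theta>\<^sup>2) + (?E * \<theta>) * (?w - ?d)"
    using EE_W[OF R] th by (intro add_left_mono mult_left_mono) auto
  also have "\<dots> = ?E * (1 - \<theta> * ?d + \<theta>\<^sup>2)" by (simp add: algebra_simps)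
  also have "\<dots> \<le> ?E * (1 - \<theta> * (\<kappa> / (4 * sqrt (real n))))"
  proof (intro mult_left_mono)
    have "\<theta>\<^sup>2 \<le> \<theta> * (\<kappa> / (4 * sqrt (real n)))"
      unfolding power2_eq_square using th by (intro mult_left_mono) auto
    moreover have "?d = 2 * (\<kappa> / (4 * sqrt (real n)))" by simp
    ultimately show "1 - \<theta> * ?d + \<theta>\<^sup>2 \<le> 1 - \<theta> * (\<kappa> / (4 * sqrt (real n)))" by (simp add: algebra_simps)
  qed simp
  finally show ?thesis by (simp add: mult.commute)
qed

end

context model begin

lemma EE_diff: "EE (\<lambda>y. f y - g y) x = EE f x - EE g x"
proof -
  have "EE (\<lambda>y. f y - g y) x = EE (\<lambda>y. f y + (-1) * g y) x" by simp
  also have "\<dots> = EE f x - EE g x" by (simp only: EE_add EE_cmult)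
  finally show ?thesis .
qed

lemma EE_single:
  assumes f1: "\<And>y. f y \<le> 1" and i0: "i0 \<in> {1..K}" and j0: "j0 < kap S i0"
  shows "EE f x \<le> 1 - lam i0 * P x i0 j0 * (1 - f (upd x (S i0 ! j0)))"
proof -
  have "EE (\<lambda>y. 1 - f y) x = (\<Sum>i=1..K. lam i * (\<Sum>j<kap S i. P x i j * (1 - f (upd x (S i ! j)))))"
    unfolding EE_def ..
  also have "\<dots> \<ge> lam i0 * (\<Sum>j<kap S i0. P x i0 j * (1 - f (upd x (S i0 ! j))))"
    by (rule member_le_sum[OF i0, where f="\<lambda>i. lam i * (\<Sum>j<kap S i. P x i j * (1 - f (upd x (S i ! j))))"])
       (auto intro!: mult_nonneg_nonneg sum_nonneg less_imp_le[OF Ksm(4)] Pnn simp: f1)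
  moreover have "(\<Sum>j<kap S i0. P x i0 j * (1 - f (upd x (S i0 ! j)))) \<ge> P x i0 j0 * (1 - f (upd x (S i0 ! j0)))"
    by (rule member_le_sum[where f="\<lambda>j. P x i0 j * (1 - f (upd x (S i0 ! j)))"])
       (use j0 i0 in \<open>auto intro!: mult_nonneg_nonneg Pnn simp: f1\<close>)
  ultimately have "EE (\<lambda>y. 1 - f y) x \<ge> lam i0 * (P x i0 j0 * (1 - f (upd x (S i0 ! j0))))"
    using Ksm(4)[OF i0] by (smt (verit) mult_left_mono)
  then show ?thesis unfolding EE_diff EE_const by (simp add: mult.assoc)
qed

definition lm where "lm = Min (lam ` {1..K})"
definition pp where "pp = min 1 (lm * p0)"

lemma lm_pos: "0 < lm" and lm_le: "i \<in> {1..K} \<Longrightarrow> lm \<le> lam i"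
proof -
  have "finite (lam ` {1..K})" "lam ` {1..K} \<noteq> {}" using Ksm(1) by auto
  then show "0 < lm" unfolding lm_def using Ksm(4) by (auto simp: Min_gr_iff)
  show "i \<in> {1..K} \<Longrightarrow> lm \<le> lam i" unfolding lm_def by auto
qed

lemma pp_pos: "0 < pp" and pp_le1: "pp \<le> 1"
  unfolding pp_def using lm_pos p0pos by auto

lemma min_node: "\<exists>i\<in>{1..K}. \<exists>j<kap S i. x (S i ! j) = Min (x ` {1..n}) \<and> pp \<le> lam i * P x i j"
proof -
  have fin: "finite (x ` {1..n})" "x ` {1..n} \<noteq> {}" using n_ge1 by auto
  obtain l where l: "l \<in> {1..n}" "x l = Min (x ` {1..n})" using Min_in[OF fin] by auto
  have "l \<in> (\<Union>i\<in>{1..K}. set (S i))" using Ksm(3) l(1) by simp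
  then obtain i where i: "i \<in> {1..K}" "l \<in> set (S i)" by blast
  have sub: "set (S i) \<subseteq> {1..n}" using Ksm(2)[OF i(1)] by auto
  have mi: "Min (x ` set (S i)) = Min (x ` {1..n})"
  proof (rule antisym)
    show "Min (x ` set (S i)) \<le> Min (x ` {1..n})" using i(2) l(2) by (metis Min_le finite_imageI finite_set image_eqI)
    show "Min (x ` {1..n}) \<le> Min (x ` set (S i))" using i(2) sub fin by (intro Min_antimono) auto
  qed
  obtain k where k: "k < kap S i" "S i ! k = l" using i(2) unfolding kap_def by (auto simp: in_set_conv_nth)
  have ex: "\<exists>j. j < kap S i \<and> x (S i ! j) = Min (x ` set (S i))"
    using k l mi by auto
  have jm: "jmin S x i < kap S i \<and> x (S i ! jmin S x i) = Min (x ` set (S i))"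
    unfolding jmin_def using LeastI_ex[OF ex] .
  have "lm * p0 \<le> lam i * P x i (jmin S x i)"
    using lm_le[OF i(1)] Pmin[OF i(1), of x] lm_pos p0pos by (intro mult_mono) auto
  then have "pp \<le> lam i * P x i (jmin S x i)" unfolding pp_def by linarith
  then show ?thesis using jm mi i(1) by auto
qed

lemma deficit0: assumes d0: "deficit n x = 0" shows "shape n x = (\<lambda>_. 0)"
proof -
  define M where "M = Max (x ` {1..n})"
  have z: "\<forall>l\<in>{1..n}. M - x l = 0"
    using d0 unfolding deficit_def M_def[symmetric] by (subst (asm) sum_eq_0_iff) auto
  have all: "x l = M" if "l \<in> {1..n}" for l
  proof -
    have "M - x l = 0" using z that by blast
    moreover have "x l \<le> M" using that unfolding M_def by simp
    ultimately show ?thesis by linarith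
  qed
  have "(\<Sum>l=1..n. real (x l)) = (\<Sum>l=1..n. real M)"
    by (rule sum.cong[OF refl]) (simp only: all)
  then have me: "mean n x = real M" unfolding mean_def using n_ge1 by simp
  show ?thesis
  proof
    fix l show "shape n x l = 0"
    proof (cases "l \<in> {1..n}")
      case True
      have "shape n x l = real (x l) - mean n x" by (rule shape_in[OF True])
      then show ?thesis using all[OF True] me by simp
    next
      case False then show ?thesis unfolding shape_def by auto
    qed
  qed
qed

lemma deficit_step:
  assumes d: "deficit n x = Suc T" and l: "l \<in> {1..n}" and lm: "x l = Min (x ` {1..n})"
  shows "deficit n (upd x l) = T"
proof -
  let ?A = "{1..n}" let ?M = "Max (x ` ?A)"
  have fin: "finite (x ` ?A)" "x ` ?A \<noteq> {}" using n_ge1 by auto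
  obtain k0 where k0: "k0 \<in> ?A" "x k0 = ?M" using Max_in[OF fin] by auto
  have "\<exists>k\<in>?A. x k < ?M"
  proof (rule ccontr)
    assume "\<not> ?thesis"
    then have "\<forall>k\<in>?A. \<not> x k < ?M" by simp
    moreover have "\<forall>k\<in>?A. x k \<le> ?M" using fin by simp
    ultimately have "\<forall>k\<in>?A. ?M - x k = 0" by (auto simp: not_less)
    then have "deficit n x = 0" unfolding deficit_def by simp
    then show False using d by simp
  qed
  then obtain k where kk: "k \<in> ?A" "x k < ?M" by blast
  have "Min (x ` ?A) \<le> x k" using kk(1) fin(1) by simp
  then have xl: "x l < ?M" using lm kk(2) by linarith
  have Mu: "Max (upd x l ` ?A) = ?M"
  proof (rule Max_eqI)
    show "finite (upd x l ` ?A)" by simp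
    show "y \<le> ?M" if yin: "y \<in> upd x l ` ?A" for y
    proof -
      obtain k where k: "k \<in> ?A" "y = upd x l k" using yin by blast
      show ?thesis
      proof (cases "k = l")
        case True then show ?thesis using k xl by (simp add: upd_def)
      next
        case False
        have "x k \<le> ?M" using k(1) fin(1) by simp
        then show ?thesis using k False by (simp add: upd_def)
      qed
    qed
    have "k0 \<noteq> l" using k0 xl by auto
    then have "upd x l k0 = ?M" using k0 by (simp add: upd_def)
    then show "?M \<in> upd x l ` ?A" using k0(1) by (metis image_eqI)
  qed
  define r where "r = (\<Sum>k\<in>?A - {l}. ?M - x k)"
  obtain a where a: "?M - x l = Suc a" using xl by (cases "?M - x l") auto
  have e1: "deficit n x = Suc a + r"
    unfolding deficit_def r_def a[symmetric] by (rule sum.remove) (use l in auto)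
  have e2: "deficit n (upd x l) = (?M - upd x l l) + (\<Sum>k\<in>?A - {l}. ?M - upd x l k)"
    unfolding deficit_def Mu by (rule sum.remove) (use l in auto)
  have e3: "(\<Sum>k\<in>?A - {l}. ?M - upd x l k) = r"
    unfolding r_def by (rule sum.cong) (auto simp: upd_def)
  have e4: "?M - upd x l l = a" using a by (simp add: upd_def)
  have "deficit n (upd x l) = a + r" unfolding e2 e3 e4 ..
  then show ?thesis using e1 d by (metis add_Suc Suc_inject)
qed

lemma deficit_upd_bound: assumes l: "l \<in> {1..n}"
  shows "deficit n (upd x l) \<le> n * (Max (x ` {1..n}) - Min (x ` {1..n}) + 1)"
proof -
  let ?A = "{1..n}" let ?M = "Max (x ` ?A)" let ?m = "Min (x ` ?A)"
  have fin: "finite (x ` ?A)" "x ` ?A \<noteq> {}" using n_ge1 by auto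
  have "\<forall>y\<in>upd x l ` ?A. y \<le> ?M + 1"
  proof
    fix y assume "y \<in> upd x l ` ?A"
    then obtain k where k: "k \<in> ?A" "y = upd x l k" by blast
    have "x k \<le> ?M" "x l \<le> ?M" using k(1) l by auto
    then show "y \<le> ?M + 1" using k(2) by (auto simp: upd_def)
  qed
  then have Mu: "Max (upd x l ` ?A) \<le> ?M + 1"
    using n_ge1 by (subst Max_le_iff) auto
  have "deficit n (upd x l) \<le> of_nat (card ?A) * (?M - ?m + 1)"
    unfolding deficit_def
  proof (rule sum_bounded_above)
    fix k assume k: "k \<in> ?A"
    have "?m \<le> x k" using k by simp
    moreover have "x k \<le> upd x l k" by (simp add: upd_def)
    ultimately show "Max (upd x l ` ?A) - upd x l k \<le> ?M - ?m + 1" using Mu by linarith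
  qed
  then show ?thesis by simp
qed

lemma step_from:
  assumes i: "i \<in> {1..K}" and j: "j < kap S i" and w: "pp \<le> lam i * P x i j"
    and h: "(if shape n (upd x (S i ! j)) \<noteq> (\<lambda>_. 0) then qq T (upd x (S i ! j)) else 0) \<le> 1 - pp ^ T"
  shows "qq (Suc T) x \<le> 1 - pp ^ Suc T"
proof -
  let ?f = "\<lambda>y. if shape n y \<noteq> (\<lambda>_. 0) then qq T y else 0"
  have f1: "?f y \<le> 1" for y using qq_le1[of T y] by auto
  have "qq (Suc T) x = EE ?f x" by (simp add: KQ_def)
  also have "\<dots> \<le> 1 - lam i * P x i j * (1 - ?f (upd x (S i ! j)))"
    by (rule EE_single[OF f1 i j])
  also have "\<dots> \<le> 1 - pp * pp ^ T"
  proof -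
    have "pp ^ T \<le> 1 - ?f (upd x (S i ! j))" using h by linarith
    moreover have "0 \<le> pp ^ T" using pp_pos by simp
    ultimately have "pp * pp ^ T \<le> lam i * P x i j * (1 - ?f (upd x (S i ! j)))"
      using w pp_pos by (intro mult_mono) auto
    then show ?thesis by linarith
  qed
  finally show ?thesis by simp
qed

lemma reach: "deficit n x = T \<Longrightarrow> (if shape n x \<noteq> (\<lambda>_. 0) then qq T x else 0) \<le> 1 - pp ^ T"
proof (induction T arbitrary: x)
  case 0 then show ?case using deficit0 by simp
next
  case (Suc T)
  show ?case
  proof (cases "shape n x = (\<lambda>_. 0)")
    case True then show ?thesis using pp_pos pp_le1 by (simp add: power_le_one mult_le_one)
  next
    case False
    obtain i j where ij: "i \<in> {1..K}" "j < kap S i" "x (S i ! j) = Min (x ` {1..n})" "pp \<le> lam i * P x i j"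
      using min_node[of x] by auto
    have "deficit n (upd x (S i ! j)) = T" by (rule deficit_step[OF Suc.prems S_in[OF ij(1,2)] ij(3)])
    then have "qq (Suc T) x \<le> 1 - pp ^ Suc T" using step_from[OF ij(1,2,4)] Suc.IH by blast
    then show ?thesis using False by simp
  qed
qed

lemma reach2: "\<exists>T0. T0 \<le> n * (Max (x ` {1..n}) - Min (x ` {1..n}) + 1) \<and> qq (Suc T0) x \<le> 1 - pp ^ Suc T0"
proof -
  obtain i j where ij: "i \<in> {1..K}" "j < kap S i" "x (S i ! j) = Min (x ` {1..n})" "pp \<le> lam i * P x i j"
    using min_node[of x] by auto
  define T0 where "T0 = deficit n (upd x (S i ! j))"
  have "qq (Suc T0) x \<le> 1 - pp ^ Suc T0"
    by (rule step_from[OF ij(1,2,4)]) (rule reach, simp add: T0_def)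
  moreover have "T0 \<le> n * (Max (x ` {1..n}) - Min (x ` {1..n}) + 1)"
    unfolding T0_def by (rule deficit_upd_bound[OF S_in[OF ij(1,2)]])
  ultimately show ?thesis by blast
qed

end

context model begin

lemma KQ_le_EE: "(\<And>y. 0 \<le> f y) \<Longrightarrow> KQ f x \<le> EE f x"
  unfolding KQ_def by (rule EE_mono) auto

lemma KQ_mono_supp:
  assumes "\<And>i j. i \<in> {1..K} \<Longrightarrow> j < kap S i \<Longrightarrow> f (upd x (S i ! j)) \<le> g (upd x (S i ! j))"
  shows "KQ f x \<le> KQ g x"
  unfolding KQ_def by (rule EE_mono_supp) (auto simp: assms)

lemma Qp_exp_bound:
  fixes \<theta> :: real assumes th: "0 < \<theta>"
  shows "Qp m (\<lambda>y. exp (\<theta> * W n y)) x \<le> exp (\<theta> * (W n x + real m)) * qq m x"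
proof (induction m arbitrary: x)
  case 0 then show ?case by simp
next
  case (Suc m)
  have "Qp (Suc m) (\<lambda>y. exp (\<theta> * W n y)) x \<le> KQ (\<lambda>y. exp (\<theta> * (W n y + real m)) * qq m y) x"
    using Suc.IH by (simp add: KQ_mono)
  also have "\<dots> \<le> KQ (\<lambda>y. exp (\<theta> * (W n x + real (Suc m))) * qq m y) x"
  proof (rule KQ_mono_supp)
    fix i j assume i: "i \<in> {1..K}" and j: "j < kap S i"
    have "W n (upd x (S i ! j)) + real m \<le> W n x + real (Suc m)"
      using W_upd_bounds[OF i j, of x] by simp
    then have "exp (\<theta> * (W n (upd x (S i ! j)) + real m)) \<le> exp (\<theta> * (W n x + real (Suc m)))"
      using th by simp
    then show "exp (\<theta> * (W n (upd x (S i ! j)) + real m)) * qq m (upd x (S i ! j))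
        \<le> exp (\<theta> * (W n x + real (Suc m))) * qq m (upd x (S i ! j))"
      by (intro mult_right_mono qq_nonneg)
  qed
  also have "\<dots> = exp (\<theta> * (W n x + real (Suc m))) * qq (Suc m) x"
    by (simp add: KQ_cmult)
  finally show ?case .
qed

lemma main_bound: "\<exists>C \<rho>. 0 < \<rho> \<and> \<rho> < 1 \<and> (\<forall>m x. qq m x \<le> C x * \<rho> ^ m)"
proof -
  define sn where "sn = sqrt (real n)"
  have sn: "0 < sn" unfolding sn_def using n_ge1 by simp
  define R where "R = sn / \<kappa>"
  have R: "0 < R" unfolding R_def using sn kpos by simp
  define d4 where "d4 = \<kappa> / (4 * sn)"
  have d4: "0 < d4" unfolding d4_def using sn kpos by simp
  define N where "N = n * (nat \<lceil>2 * R\<rceil> + 1) + 1"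
  have N1: "1 \<le> N" unfolding N_def by simp
  define \<eta> where "\<eta> = pp ^ N"
  have \<eta>: "0 < \<eta>" "\<eta> \<le> 1" unfolding \<eta>_def using pp_pos pp_le1 by (auto simp: power_le_one)
  define \<theta> where "\<theta> = min 1 (min d4 (ln (1 + \<eta> / 2) / (R + real N)))"
  have lnpos: "0 < ln (1 + \<eta> / 2)" using \<eta> by simp
  have RN: "0 < R + real N" using R by simp
  have Lpos: "0 < ln (1 + \<eta> / 2) / (R + real N)" using lnpos RN by simp
  have thL: "\<theta> \<le> ln (1 + \<eta> / 2) / (R + real N)" unfolding \<theta>_def by simp
  have th: "0 < \<theta>" "\<theta> \<le> 1" "\<theta> \<le> d4" "\<theta> * (R + real N) \<le> ln (1 + \<eta> / 2)"
  proof -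
    show "0 < \<theta>" unfolding \<theta>_def using d4 Lpos by simp
    show "\<theta> \<le> 1" "\<theta> \<le> d4" unfolding \<theta>_def by auto
    show "\<theta> * (R + real N) \<le> ln (1 + \<eta> / 2)" using thL RN by (simp add: le_divide_eq)
  qed
  define \<rho> where "\<rho> = 1 - min (\<theta> * d4) (\<eta> / (2 * real N))"
  have mpos: "0 < min (\<theta> * d4) (\<eta> / (2 * real N))" using th d4 \<eta> N1 by simp
  have mle: "min (\<theta> * d4) (\<eta> / (2 * real N)) \<le> 1/2"
  proof -
    have "\<eta> / (2 * real N) \<le> 1 / 2" using \<eta> N1 by (simp add: divide_le_eq)
    then show ?thesis by linarith
  qed
  have \<rho>: "0 < \<rho>" "\<rho> < 1" unfolding \<rho>_def using mpos mle by auto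
  define G where "G y = exp (\<theta> * W n y)" for y
  have G1: "1 \<le> G y" for y unfolding G_def using th W_nonneg[of n y] by simp
  have Gpos: "0 \<le> G y" for y using G1[of y] by simp
  have R1: "Qp 1 G x \<le> \<rho> * G x" if "R \<le> W n x" for x
  proof -
    have "Qp 1 G x = KQ G x" by simp
    also have "\<dots> \<le> EE G x" by (rule KQ_le_EE[OF Gpos])
    also have "\<dots> \<le> (1 - \<theta> * d4) * G x"
      unfolding G_def d4_def sn_def
      by (rule EE_expW) (use th that in \<open>auto simp: R_def sn_def d4_def\<close>)
    also have "\<dots> \<le> \<rho> * G x" unfolding \<rho>_def by (intro mult_right_mono Gpos) linarith
    finally show ?thesis .
  qed
  have R2: "Qp N G x \<le> \<rho> ^ N * G x" if "W n x \<le> R" for x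
  proof -
    obtain T0 where T0: "T0 \<le> n * (Max (x ` {1..n}) - Min (x ` {1..n}) + 1)" "qq (Suc T0) x \<le> 1 - pp ^ Suc T0"
      using reach2[of x] by blast
    have fin: "finite (x ` {1..n})" "x ` {1..n} \<noteq> {}" using n_ge1 by auto
    have mM: "Min (x ` {1..n}) \<le> Max (x ` {1..n})"
    proof -
      have "Min (x ` {1..n}) \<le> x 1" "x 1 \<le> Max (x ` {1..n})" using n_ge1 by auto
      then show ?thesis by linarith
    qed
    have "real (Max (x ` {1..n}) - Min (x ` {1..n})) = Dx n x" unfolding Dx_def using mM by simp
    also have "\<dots> \<le> 2 * R" using D_le_W[OF n_ge1, of x] that by simp
    finally have h: "real (Max (x ` {1..n}) - Min (x ` {1..n})) \<le> 2 * R" .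
    have "\<lceil>real (Max (x ` {1..n}) - Min (x ` {1..n}))\<rceil> \<le> \<lceil>2 * R\<rceil>"
      by (rule ceiling_mono[OF h])
    then have "int (Max (x ` {1..n}) - Min (x ` {1..n})) \<le> \<lceil>2 * R\<rceil>" by simp
    then have h2: "Max (x ` {1..n}) - Min (x ` {1..n}) \<le> nat \<lceil>2 * R\<rceil>" by (simp add: le_nat_iff)
    have "n * (Max (x ` {1..n}) - Min (x ` {1..n}) + 1) \<le> n * (nat \<lceil>2 * R\<rceil> + 1)"
      using h2 by (intro mult_le_mono2) simp
    then have "T0 \<le> n * (nat \<lceil>2 * R\<rceil> + 1)" using T0(1) by (rule le_trans[rotated])
    then have "Suc T0 \<le> N" unfolding N_def by simp
    then have "qq N x \<le> qq (Suc T0) x" by (rule qq_antimono)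
    also have "\<dots> \<le> 1 - pp ^ Suc T0" by (rule T0(2))
    also have "\<dots> \<le> 1 - \<eta>"
    proof -
      have "pp ^ N \<le> pp ^ Suc T0"
        by (rule power_decreasing) (use \<open>Suc T0 \<le> N\<close> pp_pos pp_le1 in auto)
      then show ?thesis unfolding \<eta>_def by linarith
    qed
    finally have qN: "qq N x \<le> 1 - \<eta>" .
    have "Qp N G x \<le> exp (\<theta> * (W n x + real N)) * qq N x"
      unfolding G_def by (rule Qp_exp_bound[OF th(1)])
    also have "\<dots> \<le> exp (\<theta> * (R + real N)) * (1 - \<eta>)"
      using that th qN qq_nonneg[of N x] by (intro mult_mono) auto
    also have "\<dots> \<le> (1 + \<eta> / 2) * (1 - \<eta>)"
    proof (intro mult_right_mono)
      have "exp (\<theta> * (R + real N)) \<le> exp (ln (1 + \<eta> / 2))" using th(4) by simp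
      then show "exp (\<theta> * (R + real N)) \<le> 1 + \<eta> / 2" using \<eta> by simp
    qed (use \<eta> in simp)
    also have "\<dots> \<le> 1 - \<eta> / 2" using \<eta> by (simp add: algebra_simps power2_eq_square)
    also have "\<dots> \<le> (1 + (- (\<eta> / (2 * real N)))) ^ N"
    proof -
      have "1 + real N * (- (\<eta> / (2 * real N))) \<le> (1 + (- (\<eta> / (2 * real N)))) ^ N"
        by (rule Bernoulli_inequality) (use \<eta> N1 in \<open>simp add: divide_le_eq\<close>)
      then show ?thesis using N1 by simp
    qed
    also have "\<dots> \<le> \<rho> ^ N"
      by (rule power_mono) (use \<eta> N1 in \<open>auto simp: \<rho>_def divide_le_eq\<close>)
    also have "\<dots> \<le> \<rho> ^ N * G x" using G1[of x] \<rho> by simp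
    finally show ?thesis .
  qed
  have R3: "Qp m G x \<le> exp (\<theta> * real m) * G x" for m x
  proof -
    have "Qp m G x \<le> exp (\<theta> * (W n x + real m)) * qq m x"
      unfolding G_def by (rule Qp_exp_bound[OF th(1)])
    also have "\<dots> \<le> exp (\<theta> * (W n x + real m))" using qq_le1[of m x] by simp
    also have "\<dots> = exp (\<theta> * real m) * G x" unfolding G_def by (simp add: algebra_simps exp_add)
    finally show ?thesis .
  qed
  define c where "c = exp (\<theta> * real N) / \<rho> ^ N"
  have cpos: "0 \<le> c" unfolding c_def using \<rho> by simp
  have main: "Qp m G x \<le> c * \<rho> ^ m * G x" for m x
  proof (induction m arbitrary: x rule: less_induct)
    case (less m)
    show ?case
    proof (cases "m < N")
      case True
      have "Qp m G x \<le> exp (\<theta> * real m) * G x" by (rule R3)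
      also have "\<dots> \<le> exp (\<theta> * real N) * G x" using True th by (intro mult_right_mono Gpos) auto
      also have "exp (\<theta> * real N) \<le> c * \<rho> ^ m"
      proof -
        have "\<rho> ^ N \<le> \<rho> ^ m" using True \<rho> by (intro power_decreasing) auto
        then have "exp (\<theta> * real N) * \<rho> ^ N \<le> exp (\<theta> * real N) * \<rho> ^ m" by simp
        then show ?thesis unfolding c_def using \<rho> by (simp add: field_simps)
      qed
      finally show ?thesis using Gpos[of x] by (simp add: mult_right_mono)
    next
      case False
      have step: "Qp m G x \<le> c * \<rho> ^ m * G x"
        if k: "1 \<le> k" "k \<le> m" and hk: "Qp k G x \<le> \<rho> ^ k * G x" for k
      proof -
        have "Qp m G x = Qp k (Qp (m - k) G) x" using Qp_add[of k "m - k" G] k by simp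
        also have "\<dots> \<le> Qp k (\<lambda>y. (c * \<rho> ^ (m - k)) * G y) x"
          by (rule Qp_mono) (use less.IH k in auto)
        also have "\<dots> = (c * \<rho> ^ (m - k)) * Qp k G x" by (rule Qp_cmult)
        also have "\<dots> \<le> (c * \<rho> ^ (m - k)) * (\<rho> ^ k * G x)"
          using hk cpos \<rho> by (intro mult_left_mono) auto
        also have "\<dots> = c * \<rho> ^ m * G x" using k by (simp add: power_add[symmetric] algebra_simps)
        finally show ?thesis .
      qed
      show ?thesis
      proof (cases "W n x \<le> R")
        case True then show ?thesis using step[of N] R2 N1 False by simp
      next
        case False2: False
        then show ?thesis using step[of 1] R1[of x] False N1 by simp
      qed
    qed
  qed
  have "qq m x \<le> (c * G x) * \<rho> ^ m" for m x
  proof -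
    have "qq m x \<le> Qp m G x" by (rule Qp_mono) (use G1 in auto)
    also have "\<dots> \<le> (c * G x) * \<rho> ^ m" using main[of m x] by (simp add: algebra_simps)
    finally show ?thesis .
  qed
  then have fin: "\<forall>m x. qq m x \<le> c * G x * \<rho> ^ m" by simp
  show ?thesis
    apply (rule exI[where x="\<lambda>x. c * G x"])
    apply (rule exI[where x=\<rho>])
    using fin \<rho> by simp
qed

end

context model begin

lemma tau_Suc_le: "tau x (Suc m) \<le> qq m x"
proof -
  have a: "(\<Sum>k<Suc (Suc m). tau x k) + qq (Suc m) x = 1" by (rule tau_identity)
  have b: "(\<Sum>k<Suc m. tau x k) + qq m x = 1" by (rule tau_identity)
  have "(\<Sum>k<Suc (Suc m). tau x k) = (\<Sum>k<Suc m. tau x k) + tau x (Suc m)" by simp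
  then show ?thesis using a b qq_nonneg[of "Suc m" x] by linarith
qed

lemma pos_rec: "positive_recurrent_exp n K S lam P"
proof -
  obtain C \<rho> where \<rho>: "0 < \<rho>" "\<rho> < 1" and bd: "\<And>m x. qq m x \<le> C x * \<rho> ^ m"
    using main_bound by blast
  define cf where "cf = - ln \<rho>"
  have cf: "0 < cf" unfolding cf_def using \<rho> by simp
  have ecf: "exp cf = 1 / \<rho>" unfolding cf_def using \<rho> by (simp add: exp_minus inverse_eq_divide)
  have sums1: "tau x sums 1" for x
  proof -
    have q0: "(\<lambda>m. qq m x) \<longlonglongrightarrow> 0"
    proof (rule real_tendsto_sandwich[where f="\<lambda>_. 0" and h="\<lambda>m. C x * \<rho> ^ m"])
      show "\<forall>\<^sub>F m in sequentially. 0 \<le> qq m x" by (simp add: qq_nonneg)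
      show "\<forall>\<^sub>F m in sequentially. qq m x \<le> C x * \<rho> ^ m" by (simp add: bd)
      show "(\<lambda>_. 0) \<longlonglongrightarrow> (0::real)" by simp
      have "(\<lambda>m. \<rho> ^ m) \<longlonglongrightarrow> 0" using \<rho> by (intro LIMSEQ_power_zero) simp
      then show "(\<lambda>m. C x * \<rho> ^ m) \<longlonglongrightarrow> 0" using tendsto_mult_left[of _ 0 _ "C x"] by simp
    qed
    have "(\<lambda>m. 1 - qq m x) \<longlonglongrightarrow> 1 - 0" by (intro tendsto_diff tendsto_const q0)
    moreover have "(\<lambda>m. \<Sum>k<Suc m. tau x k) = (\<lambda>m. 1 - qq m x)"
      using tau_identity by (simp add: fun_eq_iff eq_diff_eq)
    ultimately have "(\<lambda>m. \<Sum>k<Suc m. tau x k) \<longlonglongrightarrow> 1" by simp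
    then show ?thesis unfolding sums_def by (rule LIMSEQ_imp_Suc)
  qed
  have expm: "summable (\<lambda>m. exp (c' * real m) * tau x m)" if c': "0 < c'" "c' < cf" for c' x
  proof -
    have r: "exp c' * \<rho> < 1"
    proof -
      have "exp c' < exp cf" using c' by simp
      then show ?thesis using ecf \<rho> by (simp add: field_simps)
    qed
    have g: "summable (\<lambda>m. (exp c' * C x) * (exp c' * \<rho>) ^ m)"
      by (intro summable_mult summable_geometric) (use r \<rho> in simp)
    have "summable (\<lambda>m. exp (c' * real (Suc m)) * tau x (Suc m))"
    proof (rule summable_comparison_test'[OF g])
      fix m :: nat
      have t0: "0 \<le> tau x (Suc m)" by (rule tau_bounds)
      have "norm (exp (c' * real (Suc m)) * tau x (Suc m)) = exp (c' * real (Suc m)) * tau x (Suc m)"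
        using t0 by simp
      also have "\<dots> \<le> exp (c' * real (Suc m)) * (C x * \<rho> ^ m)"
        using tau_Suc_le[of x m] bd[of m x] by (intro mult_left_mono) auto
      also have "\<dots> = (exp c' * C x) * (exp c' * \<rho>) ^ m"
      proof -
        have "exp (c' * real (Suc m)) = exp c' * exp c' ^ m"
          by (simp add: distrib_left exp_add exp_of_nat_mult[symmetric] mult.commute)
        then show ?thesis by (simp add: power_mult_distrib algebra_simps)
      qed
      finally show "norm (exp (c' * real (Suc m)) * tau x (Suc m)) \<le> (exp c' * C x) * (exp c' * \<rho>) ^ m" .
    qed
    then show ?thesis by (subst (asm) summable_Suc_iff)
  qed
  have mom1: "summable (\<lambda>m. real m * tau x m)" for x
  proof -
    have s: "summable (\<lambda>m. (2 / cf) * (exp (cf / 2 * real m) * tau x m))"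
      by (intro summable_mult expm) (use cf in auto)
    show ?thesis
    proof (rule summable_comparison_test'[OF s])
      fix m :: nat
      have t0: "0 \<le> tau x m" by (rule tau_bounds)
      have "cf / 2 * real m \<le> exp (cf / 2 * real m)"
        using exp_ge_add_one_self[of "cf / 2 * real m"] by linarith
      then have "real m \<le> (2 / cf) * exp (cf / 2 * real m)" using cf by (simp add: field_simps)
      then have "real m * tau x m \<le> (2 / cf) * exp (cf / 2 * real m) * tau x m"
        using t0 by (intro mult_right_mono) auto
      then show "norm (real m * tau x m) \<le> (2 / cf) * (exp (cf / 2 * real m) * tau x m)"
        using t0 by (simp add: mult.assoc)
    qed
  qed
  show ?thesis
    unfolding positive_recurrent_exp_def finite_moment_def
    using sums1 mom1 expm cf by blast
qed

end

lemma jmin_props: assumes "S i \<noteq> []"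
  shows "jmin S x i < kap S i \<and> x (S i ! jmin S x i) = Min (x ` set (S i))"
proof -
  have "Min (x ` set (S i)) \<in> x ` set (S i)" using assms by (intro Min_in) auto
  then obtain e where e: "e \<in> set (S i)" "x e = Min (x ` set (S i))" by auto
  then obtain k where k: "k < kap S i" "S i ! k = e" unfolding kap_def by (auto simp: in_set_conv_nth)
  have ex: "\<exists>j. j < kap S i \<and> x (S i ! j) = Min (x ` set (S i))" using k e by auto
  show ?thesis unfolding jmin_def using LeastI_ex[OF ex] .
qed

lemma jmin_le: "j < kap S i \<Longrightarrow> x (S i ! j) = Min (x ` set (S i)) \<Longrightarrow> jmin S x i \<le> j"
  unfolding jmin_def by (rule Least_le) simp

lemma jmax_props: assumes "S i \<noteq> []"
  shows "jmax S x i < kap S i \<and> x (S i ! jmax S x i) = Max (x ` set (S i))"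
proof -
  have "Max (x ` set (S i)) \<in> x ` set (S i)" using assms by (intro Max_in) auto
  then obtain e where e: "e \<in> set (S i)" "x e = Max (x ` set (S i))" by auto
  then obtain k where k: "k < kap S i" "S i ! k = e" unfolding kap_def by (auto simp: in_set_conv_nth)
  show ?thesis unfolding jmax_def
    by (rule GreatestI_nat[where k=k and b="kap S i"]) (use k e in auto)
qed

lemma jmax_ge: "j < kap S i \<Longrightarrow> x (S i ! j) = Max (x ` set (S i)) \<Longrightarrow> j \<le> jmax S x i"
  unfolding jmax_def by (rule Greatest_le_nat[where b="kap S i"]) auto

lemma nth_le_Max: "j < kap S i \<Longrightarrow> x (S i ! j) \<le> Max (x ` set (S i))"
  unfolding kap_def by (simp add: nth_mem)

lemma Min_le_nth: "j < kap S i \<Longrightarrow> Min (x ` set (S i)) \<le> x (S i ! j)"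
  unfolding kap_def by (simp add: nth_mem)

lemma jmin_ne_jmax: assumes "S i \<noteq> []" "kap S i \<ge> 2" shows "jmin S x i \<noteq> jmax S x i"
proof
  assume eq: "jmin S x i = jmax S x i"
  have mM: "Min (x ` set (S i)) = Max (x ` set (S i))"
    using jmin_props[where S=S and i=i and x=x, OF assms(1)] jmax_props[where S=S and i=i and x=x, OF assms(1)] eq by simp
  have all: "x (S i ! j) = Min (x ` set (S i))" if "j < kap S i" for j
    using Min_le_nth[OF that, of x] nth_le_Max[OF that, of x] mM by linarith
  have "jmin S x i \<le> 0" using jmin_le[of 0 S i x] all[of 0] assms(2) by simp
  moreover have "kap S i - 1 \<le> jmax S x i"
    using jmax_ge[of "kap S i - 1" S i x] all[of "kap S i - 1"] mM assms(2) by simp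
  ultimately show False using eq assms(2) by simp
qed

lemma alpha_lb: "\<exists>\<kappa>>0. \<forall>i\<in>{1..K}. \<forall>j<kap S i. \<kappa> \<le> (\<alpha> i j :: real)"
  if "positive_solution n K S lam \<alpha>"
proof -
  define A where "A = (\<lambda>(i, j). \<alpha> i j) ` (SIGMA i:{1..K}. {..<kap S i})"
  define k0 where "k0 = Min (insert 1 A)"
  have fin: "finite A" unfolding A_def by auto
  have pos: "\<forall>a\<in>A. 0 < a" using that unfolding positive_solution_def A_def by auto
  have "0 < k0" unfolding k0_def using fin pos by (simp add: Min_gr_iff)
  moreover have "\<forall>i\<in>{1..K}. \<forall>j<kap S i. k0 \<le> \<alpha> i j"
  proof (intro ballI allI impI)
    fix i j assume "i \<in> {1..K}" "j < kap S i"
    then have "\<alpha> i j \<in> insert 1 A" unfolding A_def by force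
    then show "k0 \<le> \<alpha> i j" unfolding k0_def using fin by simp
  qed
  ultimately show ?thesis by blast
qed

lemma lam_le1: assumes sm: "storage_model n K S lam" and i: "i \<in> {1..K}" shows "lam i \<le> 1"
proof -
  have pos: "\<forall>i\<in>{1..K}. 0 < lam i" and s1: "(\<Sum>i=1..K. lam i) = 1"
    using sm unfolding storage_model_def by auto
  have "lam i \<le> (\<Sum>i=1..K. lam i)"
    by (rule member_le_sum[OF i]) (use pos in \<open>auto intro: less_imp_le\<close>)
  then show ?thesis using s1 by simp
qed

lemma JSQ_model:
  assumes sm: "storage_model n K S lam" and conn: "graph_connected n K S"
    and ps: "positive_solution n K S lam \<alpha>"
    and kl: "0 < \<kappa>" "\<forall>i\<in>{1..K}. \<forall>j<kap S i. \<kappa> \<le> \<alpha> i j"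
  shows "model n K S lam \<alpha> (JSQ S) \<kappa> 1"
proof
  have Sne: "\<And>i. i \<in> {1..K} \<Longrightarrow> S i \<noteq> []" using sm unfolding storage_model_def by auto
  have psf: "\<And>i. i \<in> {1..K} \<Longrightarrow> (\<Sum>j<kap S i. \<alpha> i j) = lam i"
    "\<And>i j. i \<in> {1..K} \<Longrightarrow> j < kap S i \<Longrightarrow> 0 < \<alpha> i j"
    using ps unfolding positive_solution_def by auto
  show "storage_model n K S lam" "graph_connected n K S" "positive_solution n K S lam \<alpha>" "0 < \<kappa>" "(0::real) < 1"
    using assms by auto
  show "0 \<le> JSQ S x i j" for x i j by (simp add: JSQ_def)
  show "(\<Sum>j<kap S i. JSQ S x i j) = 1" if i: "i \<in> {1..K}" for x i
    using jmin_props[where S=S and i=i and x=x, OF Sne[OF i]] unfolding JSQ_def by simp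
  show "1 \<le> JSQ S x i (jmin S x i)" for x i by (simp add: JSQ_def)
  show "lam i * (\<Sum>j<kap S i. JSQ S x i j * real (x (S i ! j)))
          \<le> (\<Sum>j<kap S i. \<alpha> i j * real (x (S i ! j))) - \<kappa> * Di S x i" if i: "i \<in> {1..K}" for x i
  proof -
    let ?mn = "real (Min (x ` set (S i)))" and ?mx = "real (Max (x ` set (S i)))"
    obtain jm where jm: "jmin S x i = jm" by simp
    obtain jM where jM: "jM < kap S i" "x (S i ! jM) = Max (x ` set (S i))"
      using jmax_props[where S=S and i=i and x=x, OF Sne[OF i]] by blast
    have jp: "jmin S x i < kap S i \<and> x (S i ! jmin S x i) = Min (x ` set (S i))"
      using jmin_props[where S=S and i=i and x=x, OF Sne[OF i]] .
    have "(\<Sum>j<kap S i. JSQ S x i j * real (x (S i ! j)))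
        = (\<Sum>j<kap S i. if j = jmin S x i then real (x (S i ! j)) else 0)"
      by (intro sum.cong) (auto simp: JSQ_def)
    also have "\<dots> = ?mn" using jp by simp
    finally have A: "(\<Sum>j<kap S i. JSQ S x i j * real (x (S i ! j))) = ?mn" .
    have B: "(\<Sum>j<kap S i. \<alpha> i j * real (x (S i ! j)))
        = lam i * ?mn + (\<Sum>j<kap S i. \<alpha> i j * (real (x (S i ! j)) - ?mn))"
      by (simp add: algebra_simps sum.distrib sum_distrib_right[symmetric] psf(1)[OF i] sum_subtractf)
    have C: "\<kappa> * Di S x i \<le> (\<Sum>j<kap S i. \<alpha> i j * (real (x (S i ! j)) - ?mn))"
    proof -
      have "\<kappa> * Di S x i \<le> \<alpha> i jM * (real (x (S i ! jM)) - ?mn)"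
      proof -
        have "Min (x ` set (S i)) \<le> Max (x ` set (S i))" using Min_le_nth[OF jM(1), of x] jM(2) by simp
        then show ?thesis
          unfolding Di_def jM(2) using kl(2) i jM(1) by (intro mult_right_mono) auto
      qed
      also have "\<dots> \<le> (\<Sum>j<kap S i. \<alpha> i j * (real (x (S i ! j)) - ?mn))"
      proof (rule member_le_sum[where f="\<lambda>j. \<alpha> i j * (real (x (S i ! j)) - ?mn)"])
        show "jM \<in> {..<kap S i}" using jM(1) by simp
        fix j assume "j \<in> {..<kap S i} - {jM}"
        then have j: "j < kap S i" by simp
        have "0 \<le> \<alpha> i j" using psf(2)[OF i j] by simp
        moreover have "0 \<le> real (x (S i ! j)) - ?mn" using Min_le_nth[OF j, of x] by simp
        ultimately show "0 \<le> \<alpha> i j * (real (x (S i ! j)) - ?mn)" by simp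
      qed simp
      finally show ?thesis .
    qed
    show ?thesis unfolding A B using C by linarith
  qed
qed

lemma PSERP_model:
  assumes sm: "storage_model n K S lam" and conn: "graph_connected n K S"
    and ps: "positive_solution n K S lam \<alpha>"
    and eps: "0 < \<epsilon>" and epsl: "\<forall>i\<in>{1..K}. \<forall>j<kap S i. \<epsilon> < \<alpha> i j"
    and kl: "0 < \<kappa>" "\<forall>i\<in>{1..K}. \<forall>j<kap S i. \<kappa> \<le> \<alpha> i j"
  shows "model n K S lam \<alpha> (PSERP S lam \<alpha> \<epsilon>) \<epsilon> (min 1 \<kappa>)"
proof
  have Sne: "\<And>i. i \<in> {1..K} \<Longrightarrow> S i \<noteq> []" using sm unfolding storage_model_def by auto
  have lpos: "\<And>i. i \<in> {1..K} \<Longrightarrow> 0 < lam i" using sm unfolding storage_model_def by auto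
  have psf: "\<And>i. i \<in> {1..K} \<Longrightarrow> (\<Sum>j<kap S i. \<alpha> i j) = lam i"
    "\<And>i j. i \<in> {1..K} \<Longrightarrow> j < kap S i \<Longrightarrow> 0 < \<alpha> i j"
    using ps unfolding positive_solution_def by auto
  have kap1: "1 \<le> kap S i" if "i \<in> {1..K}" for i using Sne[OF that] unfolding kap_def by (cases "S i") auto
  have lamP: "lam i * PSERP S lam \<alpha> \<epsilon> x i j = \<alpha> i j + (if j = jmin S x i then \<epsilon> else 0) - (if j = jmax S x i then \<epsilon> else 0)"
    if i: "i \<in> {1..K}" and k2: "kap S i \<ge> 2" for i j x
  proof -
    have ne: "jmin S x i \<noteq> jmax S x i" by (rule jmin_ne_jmax[OF Sne[OF i] k2])
    have "kap S i \<noteq> 1" using k2 by simp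
    then show ?thesis using ne lpos[OF i] unfolding PSERP_def by auto
  qed
  have sumform: "(\<Sum>j<kap S i. (\<alpha> i j + (if j = jmin S x i then \<epsilon> else 0) - (if j = jmax S x i then \<epsilon> else 0)) * v j)
      = (\<Sum>j<kap S i. \<alpha> i j * v j) + \<epsilon> * v (jmin S x i) - \<epsilon> * v (jmax S x i)"
    if i: "i \<in> {1..K}" for i x and v :: "nat \<Rightarrow> real"
  proof -
    have jm: "jmin S x i < kap S i" using jmin_props[where S=S and i=i and x=x, OF Sne[OF i]] by simp
    have jM: "jmax S x i < kap S i" using jmax_props[where S=S and i=i and x=x, OF Sne[OF i]] by simp
    have "(\<Sum>j<kap S i. (\<alpha> i j + (if j = jmin S x i then \<epsilon> else 0) - (if j = jmax S x i then \<epsilon> else 0)) * v j)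
       = (\<Sum>j<kap S i. \<alpha> i j * v j) + (\<Sum>j<kap S i. if j = jmin S x i then \<epsilon> * v j else 0)
          - (\<Sum>j<kap S i. if j = jmax S x i then \<epsilon> * v j else 0)"
    proof -
      have "(\<Sum>j<kap S i. (\<alpha> i j + (if j = jmin S x i then \<epsilon> else 0) - (if j = jmax S x i then \<epsilon> else 0)) * v j)
        = (\<Sum>j<kap S i. \<alpha> i j * v j + (if j = jmin S x i then \<epsilon> * v j else 0) - (if j = jmax S x i then \<epsilon> * v j else 0))"
        by (intro sum.cong refl) (auto simp: algebra_simps)
      then show ?thesis by (simp only: sum.distrib sum_subtractf)
    qed
    also have "\<dots> = (\<Sum>j<kap S i. \<alpha> i j * v j) + \<epsilon> * v (jmin S x i) - \<epsilon> * v (jmax S x i)"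
      using jm jM by simp
    finally show ?thesis .
  qed
  have lam1: "\<And>i. i \<in> {1..K} \<Longrightarrow> lam i \<le> 1" using lam_le1[OF sm] .
  show "storage_model n K S lam" "graph_connected n K S" "positive_solution n K S lam \<alpha>" "0 < \<epsilon>" "0 < min 1 \<kappa>"
    using assms by auto
  show "0 \<le> PSERP S lam \<alpha> \<epsilon> x i j" if i: "i \<in> {1..K}" and j: "j < kap S i" for x i j
  proof -
    have "\<epsilon> < \<alpha> i j" using epsl i j by auto
    then show ?thesis unfolding PSERP_def using lpos[OF i] eps by auto
  qed
  show "(\<Sum>j<kap S i. PSERP S lam \<alpha> \<epsilon> x i j) = 1" if i: "i \<in> {1..K}" for x i
  proof (cases "kap S i = 1")
    case True then show ?thesis unfolding PSERP_def by simp
  next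
    case False
    then have k2: "kap S i \<ge> 2" using kap1[OF i] by simp
    have "lam i * (\<Sum>j<kap S i. PSERP S lam \<alpha> \<epsilon> x i j)
        = (\<Sum>j<kap S i. (\<alpha> i j + (if j = jmin S x i then \<epsilon> else 0) - (if j = jmax S x i then \<epsilon> else 0)) * 1)"
      by (simp add: sum_distrib_left lamP[OF i k2])
    also have "\<dots> = lam i" using sumform[OF i, of x "\<lambda>_. 1"] psf(1)[OF i] by simp
    finally show ?thesis using lpos[OF i] by simp
  qed
  show "min 1 \<kappa> \<le> PSERP S lam \<alpha> \<epsilon> x i (jmin S x i)" if i: "i \<in> {1..K}" for x i
  proof (cases "kap S i = 1")
    case True then show ?thesis unfolding PSERP_def by simp
  next
    case False
    have jm: "jmin S x i < kap S i" using jmin_props[where S=S and i=i and x=x, OF Sne[OF i]] by simp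
    have a: "\<kappa> \<le> \<alpha> i (jmin S x i)" using kl(2) i jm by auto
    have "\<alpha> i (jmin S x i) + \<epsilon> \<le> (\<alpha> i (jmin S x i) + \<epsilon>) / lam i"
      using lpos[OF i] lam1[OF i] psf(2)[OF i jm] eps by (simp add: le_divide_eq mult_le_cancel_left1)
    then have "\<kappa> \<le> PSERP S lam \<alpha> \<epsilon> x i (jmin S x i)"
      unfolding PSERP_def using False a eps by simp
    then show ?thesis by simp
  qed
  show "lam i * (\<Sum>j<kap S i. PSERP S lam \<alpha> \<epsilon> x i j * real (x (S i ! j)))
          \<le> (\<Sum>j<kap S i. \<alpha> i j * real (x (S i ! j))) - \<epsilon> * Di S x i" if i: "i \<in> {1..K}" for x i
  proof (cases "kap S i = 1")
    case True
    then obtain s where s: "S i = [s]" unfolding kap_def by (cases "S i") auto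
    have "Di S x i = 0" unfolding Di_def s by simp
    moreover have "\<alpha> i 0 = lam i" using psf(1)[OF i] True by simp
    ultimately show ?thesis using True unfolding PSERP_def by simp
  next
    case False
    then have k2: "kap S i \<ge> 2" using kap1[OF i] by simp
    let ?v = "\<lambda>j. real (x (S i ! j))"
    have "lam i * (\<Sum>j<kap S i. PSERP S lam \<alpha> \<epsilon> x i j * ?v j)
        = (\<Sum>j<kap S i. (\<alpha> i j + (if j = jmin S x i then \<epsilon> else 0) - (if j = jmax S x i then \<epsilon> else 0)) * ?v j)"
      by (simp add: sum_distrib_left lamP[OF i k2, symmetric] mult.assoc)
    also have "\<dots> = (\<Sum>j<kap S i. \<alpha> i j * ?v j) + \<epsilon> * ?v (jmin S x i) - \<epsilon> * ?v (jmax S x i)"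
      by (rule sumform[OF i])
    also have "\<dots> = (\<Sum>j<kap S i. \<alpha> i j * ?v j) - \<epsilon> * Di S x i"
      using jmin_props[where S=S and i=i and x=x, OF Sne[OF i]] jmax_props[where S=S and i=i and x=x, OF Sne[OF i]]
      unfolding Di_def by (simp add: algebra_simps)
    finally show ?thesis by simp
  qed
qed

theorem theorem2p1:
  fixes n K :: nat and S :: "nat \<Rightarrow> nat list" and lam :: "nat \<Rightarrow> real"
  assumes "storage_model n K S lam"
    and "graph_connected n K S"
    and "\<exists>\<alpha>. positive_solution n K S lam \<alpha>"
  shows "positive_recurrent_exp n K S lam (JSQ S)
     \<and> (\<forall>\<alpha> \<epsilon>. positive_solution n K S lam \<alpha> \<and> 0 < \<epsilon>
          \<and> (\<forall>i\<in>{1..K}. \<forall>j<kap S i. \<epsilon> < \<alpha> i j)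
          \<longrightarrow> positive_recurrent_exp n K S lam (PSERP S lam \<alpha> \<epsilon>))"
proof
  obtain \<alpha> where ps: "positive_solution n K S lam \<alpha>" using assms(3) by blast
  obtain \<kappa> where kl: "0 < \<kappa>" "\<forall>i\<in>{1..K}. \<forall>j<kap S i. \<kappa> \<le> \<alpha> i j" using alpha_lb[OF ps] by blast
  interpret m: model n K S lam \<alpha> "JSQ S" \<kappa> 1 by (rule JSQ_model[OF assms(1,2) ps kl])
  show "positive_recurrent_exp n K S lam (JSQ S)" by (rule m.pos_rec)
next
  show "\<forall>\<alpha> \<epsilon>. positive_solution n K S lam \<alpha> \<and> 0 < \<epsilon>
          \<and> (\<forall>i\<in>{1..K}. \<forall>j<kap S i. \<epsilon> < \<alpha> i j)
          \<longrightarrow> positive_recurrent_exp n K S lam (PSERP S lam \<alpha> \<epsilon>)"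
  proof (intro allI impI)
    fix \<alpha> \<epsilon> assume h: "positive_solution n K S lam \<alpha> \<and> 0 < \<epsilon> \<and> (\<forall>i\<in>{1..K}. \<forall>j<kap S i. \<epsilon> < \<alpha> i j)"
    obtain \<kappa> where kl: "0 < \<kappa>" "\<forall>i\<in>{1..K}. \<forall>j<kap S i. \<kappa> \<le> \<alpha> i j" using alpha_lb h by blast
    interpret m: model n K S lam \<alpha> "PSERP S lam \<alpha> \<epsilon>" \<epsilon> "min 1 \<kappa>"
      using PSERP_model[OF assms(1,2) _ _ _ kl] h by blast
    show "positive_recurrent_exp n K S lam (PSERP S lam \<alpha> \<epsilon>)" by (rule m.pos_rec)
  qed
qed

end
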